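(* If $G$ is a BDH graph (with no universal vertex), then the poset $(\mathcal{B}(G),\preceq)$ of its maximal bicliques has order dimension at most $3$.
   Context: For a bipartite graph with color classes $X,Y$, a biclique is a vertex set inducing a complete bipartite subgraph with shores $X(B)=B\cap X$, $Y(B)=B\cap Y$; $\mathcal{B}(G)$ is the set of maximal bicliques, ordered by $B\preceq B'\iff X(B)\subseteq X(B')$. A graph is distance hereditary if distances in every connected induced subgraph equal distances in the graph; BDH means bipartite distance hereditary. A universal vertex is adjacent to all vertices of the opposite color class. The order dimension of a poset is the least number of linear orders whose intersection is the poset's order. *)

theory Defs
  imports Main "HOL-Library.Extended_Nat"
begin

definition simple_graph :: "'a set \<Rightarrow> ('a \<Rightarrow> 'a \<Rightarrow> bool) \<Rightarrow> bool" where
  "simple_graph V E \<longleftrightarrow> finite V \<and> (\<forall>u v. E u v \<longrightarrow> u \<in> V \<and> v \<in> V)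
     \<and> (\<forall>u v. E u v \<longrightarrow> E v u) \<and> (\<forall>v. \<not> E v v)"

definition bipartite_graph :: "'a set \<Rightarrow> 'a set \<Rightarrow> ('a \<Rightarrow> 'a \<Rightarrow> bool) \<Rightarrow> bool" where
  "bipartite_graph X Y E \<longleftrightarrow> simple_graph (X \<union> Y) E \<and> X \<inter> Y = {}
     \<and> (\<forall>u v. E u v \<longrightarrow> (u \<in> X \<and> v \<in> Y) \<or> (u \<in> Y \<and> v \<in> X))"

definition walk_in :: "('a \<Rightarrow> 'a \<Rightarrow> bool) \<Rightarrow> 'a set \<Rightarrow> 'a list \<Rightarrow> bool" where
  "walk_in E S xs \<longleftrightarrow> xs \<noteq> [] \<and> set xs \<subseteq> S
     \<and> (\<forall>i. Suc i < length xs \<longrightarrow> E (xs ! i) (xs ! Suc i))"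

text \<open>Distance in the induced subgraph G[S] (infinite if no walk exists).\<close>
definition dist_in :: "('a \<Rightarrow> 'a \<Rightarrow> bool) \<Rightarrow> 'a set \<Rightarrow> 'a \<Rightarrow> 'a \<Rightarrow> enat" where
  "dist_in E S u v = (INF xs \<in> {xs. walk_in E S xs \<and> hd xs = u \<and> last xs = v}.
                         enat (length xs - 1))"

definition connected_in :: "('a \<Rightarrow> 'a \<Rightarrow> bool) \<Rightarrow> 'a set \<Rightarrow> bool" where
  "connected_in E S \<longleftrightarrow> (\<forall>u\<in>S. \<forall>v\<in>S. \<exists>xs. walk_in E S xs \<and> hd xs = u \<and> last xs = v)"

definition distance_hereditary :: "'a set \<Rightarrow> ('a \<Rightarrow> 'a \<Rightarrow> bool) \<Rightarrow> bool" where
  "distance_hereditary V E \<longleftrightarrow>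
     (\<forall>S. S \<subseteq> V \<and> connected_in E S \<longrightarrow>
        (\<forall>u\<in>S. \<forall>v\<in>S. dist_in E S u v = dist_in E V u v))"

definition BDH :: "'a set \<Rightarrow> 'a set \<Rightarrow> ('a \<Rightarrow> 'a \<Rightarrow> bool) \<Rightarrow> bool" where
  "BDH X Y E \<longleftrightarrow> bipartite_graph X Y E \<and> distance_hereditary (X \<union> Y) E"

definition has_universal_vertex :: "'a set \<Rightarrow> 'a set \<Rightarrow> ('a \<Rightarrow> 'a \<Rightarrow> bool) \<Rightarrow> bool" where
  "has_universal_vertex X Y E \<longleftrightarrow>
     (\<exists>x\<in>X. \<forall>y\<in>Y. E x y) \<or> (\<exists>y\<in>Y. \<forall>x\<in>X. E y x)"

text \<open>Biclique: a vertex set inducing a complete bipartite subgraph with shores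
  B \<inter> X and B \<inter> Y (shores may be empty).\<close>
definition biclique :: "'a set \<Rightarrow> 'a set \<Rightarrow> ('a \<Rightarrow> 'a \<Rightarrow> bool) \<Rightarrow> 'a set \<Rightarrow> bool" where
  "biclique X Y E B \<longleftrightarrow> B \<subseteq> X \<union> Y \<and> (\<forall>x\<in>B \<inter> X. \<forall>y\<in>B \<inter> Y. E x y)"

definition max_bicliques :: "'a set \<Rightarrow> 'a set \<Rightarrow> ('a \<Rightarrow> 'a \<Rightarrow> bool) \<Rightarrow> 'a set set" where
  "max_bicliques X Y E = {B. biclique X Y E B \<and>
      (\<forall>B'. biclique X Y E B' \<and> B \<subseteq> B' \<longrightarrow> B' = B)}"

definition biclique_order :: "'a set \<Rightarrow> 'a set \<Rightarrow> ('a \<Rightarrow> 'a \<Rightarrow> bool) \<Rightarrow> ('a set \<times> 'a set) set" where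
  "biclique_order X Y E = {(B, B'). B \<in> max_bicliques X Y E \<and> B' \<in> max_bicliques X Y E
       \<and> B \<inter> X \<subseteq> B' \<inter> X}"

definition realizer :: "'b set \<Rightarrow> ('b \<times> 'b) set \<Rightarrow> ('b \<times> 'b) set set \<Rightarrow> bool" where
  "realizer A P R \<longleftrightarrow> (\<forall>L\<in>R. linear_order_on A L) \<and> \<Inter>R = P"

definition order_dimension :: "'b set \<Rightarrow> ('b \<times> 'b) set \<Rightarrow> nat" where
  "order_dimension A P = (LEAST k. \<exists>R. finite R \<and> card R = k \<and> realizer A P R)"

end

theory Submission
  imports Defs "HOL-Library.Product_Lexorder"
begin


lemma mb_biclique: "B \<in> max_bicliques X Y E \<Longrightarrow> biclique X Y E B"
  by (simp add: max_bicliques_def)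

lemma mb_eq:
  assumes "B \<in> max_bicliques X Y E" "B' \<in> max_bicliques X Y E" "B \<inter> X = B' \<inter> X"
  shows "B = B'"
proof -
  have b1: "biclique X Y E B" "biclique X Y E B'" using assms(1,2) by (simp_all add: max_bicliques_def)
  have bc: "biclique X Y E (B \<union> B')"
    unfolding biclique_def
  proof (intro conjI ballI)
    show "B \<union> B' \<subseteq> X \<union> Y" using b1 unfolding biclique_def by blast
  next
    fix x y assume "x \<in> (B \<union> B') \<inter> X" "y \<in> (B \<union> B') \<inter> Y"
    then have "x \<in> B \<inter> X" "x \<in> B' \<inter> X" "y \<in> B \<inter> Y \<or> y \<in> B' \<inter> Y" using assms(3) by blast+
    then show "E x y" using b1 unfolding biclique_def by blast
  qed
  have m1: "\<forall>B''. biclique X Y E B'' \<and> B \<subseteq> B'' \<longrightarrow> B'' = B" using assms(1) by (simp add: max_bicliques_def)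
  have m2: "\<forall>B''. biclique X Y E B'' \<and> B' \<subseteq> B'' \<longrightarrow> B'' = B'" using assms(2) by (simp add: max_bicliques_def)
  have "B \<union> B' = B" "B \<union> B' = B'" using m1 m2 bc by auto
  then show ?thesis by simp
qed

lemma mb_not_sub:
  assumes "B' \<in> max_bicliques X Y E" "x \<in> X" "x \<notin> B'" "X \<inter> Y = {}"
  shows "\<exists>y\<in>B' \<inter> Y. \<not> E x y"
proof (rule ccontr)
  assume "\<not> ?thesis"
  then have "biclique X Y E (insert x B')"
    using assms mb_biclique[OF assms(1)] unfolding biclique_def by blast
  moreover have "\<forall>B''. biclique X Y E B'' \<and> B' \<subseteq> B'' \<longrightarrow> B'' = B'" using assms(1) by (simp add: max_bicliques_def)
  ultimately have "insert x B' = B'" by blast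
  then show False using assms(3) by blast
qed

lemma mb_sub: "B \<in> max_bicliques X Y E \<Longrightarrow> B \<subseteq> X \<union> Y"
  by (simp add: max_bicliques_def biclique_def)

lemma linear_order_key:
  fixes key :: "'b \<Rightarrow> 'c::linorder"
  assumes "inj_on key A"
  shows "linear_order_on A {(C,C'). C \<in> A \<and> C' \<in> A \<and> key C \<le> key C'}"
proof -
  let ?L = "{(C,C'). C \<in> A \<and> C' \<in> A \<and> key C \<le> key C'}"
  have r: "refl_on A ?L" unfolding refl_on_def by auto
  have t: "trans ?L" unfolding trans_def by auto
  have a: "antisym ?L" unfolding antisym_def using assms by (auto simp: inj_on_def)
  have to: "total_on A ?L" unfolding total_on_def by auto
  show ?thesis unfolding linear_order_on_def partial_order_on_def preorder_on_def
    using r t a to by blast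
qed

lemma dim_from_orders:
  fixes F :: "nat \<Rightarrow> 'a \<Rightarrow> int"
  assumes fin: "finite (X \<union> Y)" and disj: "X \<inter> Y = {}"
    and R1: "\<And>i x y. i < 3 \<Longrightarrow> x \<in> X \<Longrightarrow> y \<in> Y \<Longrightarrow> E x y \<Longrightarrow> F i y < F i x"
    and R2: "\<And>x y. x \<in> X \<Longrightarrow> y \<in> Y \<Longrightarrow> \<not> E x y \<Longrightarrow> \<exists>i<3. F i x < F i y"
  shows "order_dimension (max_bicliques X Y E) (biclique_order X Y E) \<le> 3"
proof -
  define MB where "MB = max_bicliques X Y E"
  define P where "P = biclique_order X Y E"
  have MBsub: "MB \<subseteq> Pow (X \<union> Y)" using mb_sub unfolding MB_def by blast
  have finMB: "finite MB" using MBsub fin by (meson finite_Pow_iff finite_subset)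
  obtain h :: "'a set \<Rightarrow> nat" where h: "inj_on h MB"
    using finite_imp_inj_to_nat_seg[OF finMB] by blast
  obtain M :: int where M: "\<And>i v. i < 3 \<Longrightarrow> v \<in> X \<union> Y \<Longrightarrow> F i v < M"
  proof -
    define M where "M = Max (insert 0 (\<Union>i<3. F i ` (X \<union> Y))) + 1"
    have "\<And>i v. i < 3 \<Longrightarrow> v \<in> X \<union> Y \<Longrightarrow> F i v < M"
    proof -
      fix i v assume "i < (3::nat)" "v \<in> X \<union> Y"
      then have "F i v \<le> Max (insert 0 (\<Union>i<3. F i ` (X \<union> Y)))"
        using fin by (intro Max_ge) auto
      then show "F i v < M" unfolding M_def by simp
    qed
    then show ?thesis using that by blast
  qed
  define mu where "mu i C = Min (insert M (F i ` (C \<inter> X)))" for i C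
  define key where "key i C = (M - mu i C, card (C \<inter> X), h C)" for i C
  define L where "L i = {(C,C'). C \<in> MB \<and> C' \<in> MB \<and> key i C \<le> key i C'}" for i
  have finCX: "finite (C \<inter> X)" if "C \<in> MB" for C
    using that MBsub fin by (meson finite_Int finite_Un)
  have injk: "inj_on (key i) MB" for i
    using h unfolding key_def inj_on_def by auto
  have lin: "linear_order_on MB (L i)" for i
    unfolding L_def by (rule linear_order_key[OF injk])
  have PL: "P \<subseteq> L i" for i
  proof
    fix p assume "p \<in> P"
    then obtain C C' where p: "p = (C,C')" "C \<in> MB" "C' \<in> MB" "C \<inter> X \<subseteq> C' \<inter> X"
      unfolding P_def biclique_order_def MB_def by blast
    have m1: "mu i C' \<le> mu i C"
      unfolding mu_def using p finCX by (intro Min_antimono) auto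
    have "key i C \<le> key i C'"
    proof (cases "mu i C' < mu i C")
      case True then show ?thesis unfolding key_def by simp
    next
      case False
      then have eq: "mu i C' = mu i C" using m1 by simp
      have c: "card (C \<inter> X) \<le> card (C' \<inter> X)" using p finCX by (intro card_mono) auto
      show ?thesis
      proof (cases "card (C \<inter> X) < card (C' \<inter> X)")
        case True then show ?thesis unfolding key_def using eq by simp
      next
        case False
        then have "card (C \<inter> X) = card (C' \<inter> X)" using c by simp
        then have "C \<inter> X = C' \<inter> X" using card_subset_eq[OF finCX[OF p(3)] p(4)] by simp
        then have "C = C'" using mb_eq p unfolding MB_def by blast
        then show ?thesis by simp
      qed
    qed
    then show "p \<in> L i" unfolding L_def using p by simp
  qed
  have LP: "(\<Inter>i<3. L i) \<subseteq> P"
  proof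
    fix p assume pin: "p \<in> (\<Inter>i<3. L i)"
    have "p \<in> L 0" using pin by (simp add: lessThan_def)
    then obtain C C' where p: "p = (C,C')" "C \<in> MB" "C' \<in> MB"
      unfolding L_def by auto
    show "p \<in> P"
    proof (rule ccontr)
      assume "p \<notin> P"
      then have "\<not> C \<inter> X \<subseteq> C' \<inter> X" using p unfolding P_def biclique_order_def MB_def by blast
      then obtain x where x: "x \<in> C" "x \<in> X" "x \<notin> C'" by blast
      obtain y where y: "y \<in> C' \<inter> Y" "\<not> E x y" using mb_not_sub[OF _ x(2,3) disj] p unfolding MB_def by blast
      obtain i where i: "i < 3" "F i x < F i y" using R2[OF x(2) _ y(2)] y by blast
      have bc': "biclique X Y E C'" using p mb_biclique unfolding MB_def by blast
      have yV: "y \<in> X \<union> Y" using y by blast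
      have "\<forall>a \<in> insert M (F i ` (C' \<inter> X)). F i y < a"
      proof
        fix a assume "a \<in> insert M (F i ` (C' \<inter> X))"
        then show "F i y < a"
        proof
          assume "a = M" then show ?thesis using M[OF i(1) yV] by simp
        next
          assume "a \<in> F i ` (C' \<inter> X)"
          then obtain x' where "x' \<in> C' \<inter> X" "a = F i x'" by blast
          moreover have "E x' y" using bc' y \<open>x' \<in> C' \<inter> X\<close> unfolding biclique_def by blast
          ultimately show ?thesis using R1[OF i(1)] y by blast
        qed
      qed
      moreover have "finite (insert M (F i ` (C' \<inter> X)))" using finCX[OF p(3)] by simp
      ultimately have "F i y < mu i C'" unfolding mu_def by simp
      moreover have "mu i C \<le> F i x" unfolding mu_def using x finCX[OF p(2)] by (intro Min_le) auto
      ultimately have "key i C' < key i C" using i unfolding key_def by simp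
      then have "p \<notin> L i" unfolding L_def using p by auto
      then show False using pin i by blast
    qed
  qed
  have eqP: "\<Inter> (L ` {..<3}) = P"
  proof
    show "\<Inter> (L ` {..<3}) \<subseteq> P" using LP by simp
    show "P \<subseteq> \<Inter> (L ` {..<3})" using PL by blast
  qed
  have real: "realizer MB P (L ` {..<3})"
    unfolding realizer_def using lin eqP by blast
  have "order_dimension MB P \<le> card (L ` {..<3})"
    unfolding order_dimension_def
    by (rule Least_le) (use real in blast)
  also have "\<dots> \<le> 3" using card_image_le[of "{..<3::nat}" L] by simp
  finally show ?thesis unfolding MB_def P_def .
qed




definition INV :: "'a set \<Rightarrow> 'a set \<Rightarrow> ('a \<Rightarrow> 'a \<Rightarrow> bool) \<Rightarrow> ('a \<Rightarrow> int) \<Rightarrow> ('a \<Rightarrow> int) \<Rightarrow> ('a \<Rightarrow> int) \<Rightarrow> bool" where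
"INV X Y E f1 f2 f3 \<longleftrightarrow>
  inj_on f1 (X \<union> Y) \<and> inj_on f2 (X \<union> Y) \<and> inj_on f3 (X \<union> Y) \<and>
  (\<forall>x\<in>X. \<forall>y\<in>Y. E x y \<longrightarrow> f1 y < f1 x \<and> f2 y < f2 x \<and> f3 y < f3 x) \<and>
  (\<forall>u\<in>X \<union> Y. \<forall>w\<in>X \<union> Y. u \<noteq> w \<and> \<not> E u w \<longrightarrow> f1 u < f1 w \<or> f2 u < f2 w \<or> f3 u < f3 w) \<and>
  (\<forall>y\<in>Y. \<forall>w\<in>X \<union> Y. w \<noteq> y \<and> \<not> E y w \<and> f1 w < f1 y \<and> f2 w < f2 y \<longrightarrow> (\<forall>x\<in>X. E y x \<longrightarrow> f3 x < f3 w)) \<and>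
  (\<forall>x\<in>X. \<forall>w\<in>X \<union> Y. w \<noteq> x \<and> \<not> E x w \<and> f1 x < f1 w \<and> f3 x < f3 w \<longrightarrow> (\<forall>y\<in>Y. E x y \<longrightarrow> f2 w < f2 y))"

lemma INV_dual:
  assumes "INV X Y E f1 f2 f3" and sym: "\<And>u w. E u w \<Longrightarrow> E w u"
  shows "INV Y X E (\<lambda>z. - f1 z) (\<lambda>z. - f3 z) (\<lambda>z. - f2 z)"
proof -
  have i: "inj_on (\<lambda>z. - f z) S" if "inj_on f S" for f :: "'a \<Rightarrow> int" and S
    using that unfolding inj_on_def by auto
  have I: "inj_on f1 (X \<union> Y)" "inj_on f2 (X \<union> Y)" "inj_on f3 (X \<union> Y)"
   and R1: "\<And>x y. x\<in>X \<Longrightarrow> y\<in>Y \<Longrightarrow> E x y \<Longrightarrow> f1 y < f1 x \<and> f2 y < f2 x \<and> f3 y < f3 x"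
   and R2: "\<And>u w. u\<in>X \<union> Y \<Longrightarrow> w\<in>X \<union> Y \<Longrightarrow> u \<noteq> w \<Longrightarrow> \<not> E u w \<Longrightarrow> f1 u < f1 w \<or> f2 u < f2 w \<or> f3 u < f3 w"
   and A: "\<And>y w x. y\<in>Y \<Longrightarrow> w\<in>X \<union> Y \<Longrightarrow> w \<noteq> y \<Longrightarrow> \<not> E y w \<Longrightarrow> f1 w < f1 y \<Longrightarrow> f2 w < f2 y \<Longrightarrow> x \<in> X \<Longrightarrow> E y x \<Longrightarrow> f3 x < f3 w"
   and C: "\<And>x w y. x\<in>X \<Longrightarrow> w\<in>X \<union> Y \<Longrightarrow> w \<noteq> x \<Longrightarrow> \<not> E x w \<Longrightarrow> f1 x < f1 w \<Longrightarrow> f3 x < f3 w \<Longrightarrow> y \<in> Y \<Longrightarrow> E x y \<Longrightarrow> f2 w < f2 y"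
    using assms(1) unfolding INV_def by blast+
  have U: "Y \<union> X = X \<union> Y" by blast
  show ?thesis unfolding INV_def U
  proof (intro conjI ballI impI allI)
    show "inj_on (\<lambda>z. - f1 z) (X \<union> Y)" using i[OF I(1)] .
    show "inj_on (\<lambda>z. - f3 z) (X \<union> Y)" using i[OF I(3)] .
    show "inj_on (\<lambda>z. - f2 z) (X \<union> Y)" using i[OF I(2)] .
  next
    fix x y assume "x \<in> Y" "y \<in> X" "E x y"
    then have "f1 x < f1 y \<and> f2 x < f2 y \<and> f3 x < f3 y" using R1 sym by blast
    then show "- f1 y < - f1 x" "- f3 y < - f3 x" "- f2 y < - f2 x" by simp_all
  next
    fix u w assume "u \<in> X \<union> Y" "w \<in> X \<union> Y" "u \<noteq> w \<and> \<not> E u w"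
    then have "f1 w < f1 u \<or> f2 w < f2 u \<or> f3 w < f3 u" using R2 sym by metis
    then show "- f1 u < - f1 w \<or> - f3 u < - f3 w \<or> - f2 u < - f2 w" by auto
  next
    fix y w x assume "y \<in> X" "w \<in> X \<union> Y" "w \<noteq> y \<and> \<not> E y w \<and> - f1 w < - f1 y \<and> - f3 w < - f3 y"
      "x \<in> Y" "E y x"
    then have "f2 w < f2 x" using C[of y w x] by auto
    then show "- f2 x < - f2 w" by simp
  next
    fix x w y assume "x \<in> Y" "w \<in> X \<union> Y" "w \<noteq> x \<and> \<not> E x w \<and> - f1 x < - f1 w \<and> - f2 x < - f2 w"
      "y \<in> X" "E x y"
    then have "f3 y < f3 w" using A[of x w y] by auto
    then show "- f3 w < - f3 y" by simp
  qed
qed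

lemma par2: "2 * (a::int) \<noteq> 2 * b + 1" by presburger
lemma par2': "2 * (a::int) \<noteq> 2 * b - 1" by presburger
lemma par3: "2 * (b::int) + 1 \<noteq> 2 * a" by presburger
lemma par3': "2 * (b::int) - 1 \<noteq> 2 * a" by presburger

lemma inj_ins:
  fixes f :: "'a \<Rightarrow> int"
  assumes "inj_on f V" "v \<notin> V"
  shows "inj_on ((\<lambda>z. 2 * f z)(v := 2 * c + 1)) (insert v V)"
  using assms par2 par3 unfolding inj_on_def by (auto simp: fun_upd_def)

lemma inj_ins':
  fixes f :: "'a \<Rightarrow> int"
  assumes "inj_on f V" "v \<notin> V"
  shows "inj_on ((\<lambda>z. 2 * f z)(v := 2 * c - 1)) (insert v V)"
  using assms par2' par3' unfolding inj_on_def by (auto simp: fun_upd_def)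

lemma inj_ins_b:
  fixes f :: "'a \<Rightarrow> int"
  assumes "inj_on f V" "v \<notin> V" "\<And>z. z \<in> V \<Longrightarrow> f z \<noteq> c"
  shows "inj_on (f(v := c)) (insert v V)"
  using assms unfolding inj_on_def by (auto simp: fun_upd_def)

locale ins =
  fixes X Y :: "'a set" and E :: "'a \<Rightarrow> 'a \<Rightarrow> bool" and v :: 'a
  assumes sym: "\<And>u w. E u w \<Longrightarrow> E w u"
    and disj: "X \<inter> Y = {}"
    and vnew: "v \<notin> X \<union> Y"
    and cross: "\<And>u w. u \<in> insert v X \<union> Y \<Longrightarrow> w \<in> insert v X \<union> Y \<Longrightarrow> E u w \<Longrightarrow>
                   (u \<in> insert v X \<and> w \<in> Y) \<or> (u \<in> Y \<and> w \<in> insert v X)"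
    and fin: "finite (X \<union> Y)"
begin

lemma noEXX: "u \<in> insert v X \<Longrightarrow> w \<in> insert v X \<Longrightarrow> \<not> E u w"
  using cross disj vnew by blast

lemma noEYY: "u \<in> Y \<Longrightarrow> w \<in> Y \<Longrightarrow> \<not> E u w"
  using cross disj vnew by blast

lemma ins_iso:
  assumes inv: "INV X Y E f1 f2 f3" and iso: "\<And>w. w \<in> Y \<Longrightarrow> \<not> E v w"
  shows "\<exists>g1 g2 g3. INV (insert v X) Y E g1 g2 g3"
proof -
  obtain B :: int where B: "\<And>z. z \<in> X \<union> Y \<Longrightarrow> \<bar>f1 z\<bar> < B \<and> \<bar>f2 z\<bar> < B \<and> \<bar>f3 z\<bar> < B"
  proof -
    define B where "B = Max (insert 0 ((\<lambda>z. \<bar>f1 z\<bar> + \<bar>f2 z\<bar> + \<bar>f3 z\<bar>) ` (X \<union> Y))) + 1"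
    have "\<bar>f1 z\<bar> + \<bar>f2 z\<bar> + \<bar>f3 z\<bar> \<le> B - 1" if "z \<in> X \<union> Y" for z
      unfolding B_def using fin that by (auto intro!: Max_ge)
    then have "\<And>z. z \<in> X \<union> Y \<Longrightarrow> \<bar>f1 z\<bar> < B \<and> \<bar>f2 z\<bar> < B \<and> \<bar>f3 z\<bar> < B"
      by (smt (verit, best) abs_ge_zero)
    then show ?thesis using that by blast
  qed
  define g1 where "g1 = f1(v := - B)"
  define g2 where "g2 = f2(v := B)"
  define g3 where "g3 = f3(v := - B)"
  have I: "inj_on f1 (X \<union> Y)" "inj_on f2 (X \<union> Y)" "inj_on f3 (X \<union> Y)"
   and R1: "\<And>x y. x\<in>X \<Longrightarrow> y\<in>Y \<Longrightarrow> E x y \<Longrightarrow> f1 y < f1 x \<and> f2 y < f2 x \<and> f3 y < f3 x"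
   and R2: "\<And>u w. u\<in>X \<union> Y \<Longrightarrow> w\<in>X \<union> Y \<Longrightarrow> u \<noteq> w \<Longrightarrow> \<not> E u w \<Longrightarrow> f1 u < f1 w \<or> f2 u < f2 w \<or> f3 u < f3 w"
   and A: "\<And>y w x. y\<in>Y \<Longrightarrow> w\<in>X \<union> Y \<Longrightarrow> w \<noteq> y \<Longrightarrow> \<not> E y w \<Longrightarrow> f1 w < f1 y \<Longrightarrow> f2 w < f2 y \<Longrightarrow> x \<in> X \<Longrightarrow> E y x \<Longrightarrow> f3 x < f3 w"
   and C: "\<And>x w y. x\<in>X \<Longrightarrow> w\<in>X \<union> Y \<Longrightarrow> w \<noteq> x \<Longrightarrow> \<not> E x w \<Longrightarrow> f1 x < f1 w \<Longrightarrow> f3 x < f3 w \<Longrightarrow> y \<in> Y \<Longrightarrow> E x y \<Longrightarrow> f2 w < f2 y"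
    using inv unfolding INV_def by blast+
  have vV: "v \<notin> X \<union> Y" using vnew .
  have gv: "g1 v = - B" "g2 v = B" "g3 v = - B" unfolding g1_def g2_def g3_def by simp_all
  have gz: "g1 z = f1 z" "g2 z = f2 z" "g3 z = f3 z" if "z \<noteq> v" for z
    using that unfolding g1_def g2_def g3_def by simp_all
  have Bz: "- B < f1 z" "f2 z < B" "- B < f3 z" if "z \<in> X \<union> Y" for z
    using B[OF that] by linarith+
  have "INV (insert v X) Y E g1 g2 g3"
    unfolding INV_def
  proof (intro conjI ballI impI allI)
    show "inj_on g1 (insert v X \<union> Y)" unfolding g1_def using inj_ins_b[OF I(1) vV, of "-B"] Bz by fastforce
    show "inj_on g2 (insert v X \<union> Y)" unfolding g2_def using inj_ins_b[OF I(2) vV, of "B"] Bz by fastforce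
    show "inj_on g3 (insert v X \<union> Y)" unfolding g3_def using inj_ins_b[OF I(3) vV, of "-B"] Bz by fastforce
  next
    fix x y assume xy: "x \<in> insert v X" "y \<in> Y" "E x y"
    then have "x \<noteq> v" using iso by blast
    then have "x \<in> X" "y \<noteq> v" using xy vnew by auto
    then show "g1 y < g1 x" "g2 y < g2 x" "g3 y < g3 x"
      using R1[OF _ xy(2,3)] gz \<open>x \<noteq> v\<close> by auto
  next
    fix u w assume uw: "u \<in> insert v X \<union> Y" "w \<in> insert v X \<union> Y" "u \<noteq> w \<and> \<not> E u w"
    show "g1 u < g1 w \<or> g2 u < g2 w \<or> g3 u < g3 w"
    proof (cases "u = v")
      case True
      then have "w \<noteq> v" "w \<in> X \<union> Y" using uw by auto
      then show ?thesis using True gv gz Bz by auto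
    next
      case False
      note uF = False
      show ?thesis
      proof (cases "w = v")
        case True
        then have "u \<in> X \<union> Y" using uw uF by auto
        then show ?thesis using True uF gv gz Bz by auto
      next
        case False
        then have "u \<in> X \<union> Y" "w \<in> X \<union> Y" using uw uF by auto
        then show ?thesis using R2[of u w] uw gz uF False by auto
      qed
    qed
  next
    fix y w x assume h: "y \<in> Y" "w \<in> insert v X \<union> Y"
      "w \<noteq> y \<and> \<not> E y w \<and> g1 w < g1 y \<and> g2 w < g2 y" "x \<in> insert v X" "E y x"
    have yv: "y \<noteq> v" using h vnew by auto
    have xv: "x \<noteq> v" using h(5) iso sym h(1) by blast
    have wv: "w \<noteq> v"
    proof
      assume "w = v" then have "g2 w = B" using gv by simp
      moreover have "g2 y < B" using gz[OF yv] Bz h(1) by auto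
      ultimately show False using h(3) by simp
    qed
    have "f3 x < f3 w" using A[of y w x] h xv wv gz yv by auto
    then show "g3 x < g3 w" using gz xv wv by simp
  next
    fix x w y assume h: "x \<in> insert v X" "w \<in> insert v X \<union> Y"
      "w \<noteq> x \<and> \<not> E x w \<and> g1 x < g1 w \<and> g3 x < g3 w" "y \<in> Y" "E x y"
    have yv: "y \<noteq> v" using h vnew by auto
    have xv: "x \<noteq> v" using h(5) iso h(4) by blast
    have wv: "w \<noteq> v"
    proof
      assume "w = v" then have "g1 w = - B" using gv by simp
      moreover have "- B < g1 x" using gz[OF xv] Bz h(1) xv by auto
      ultimately show False using h(3) by simp
    qed
    have "f2 w < f2 y" using C[of x w y] h xv wv gz yv by auto
    then show "g2 w < g2 y" using gz yv wv by simp
  qed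
  then show ?thesis by blast
qed

lemma ins_twin:
  assumes inv: "INV X Y E f1 f2 f3" and v'X: "v' \<in> X" and tw: "\<And>w. w \<in> Y \<Longrightarrow> E v w \<longleftrightarrow> E v' w"
  shows "\<exists>g1 g2 g3. INV (insert v X) Y E g1 g2 g3"
proof -
  have I: "inj_on f1 (X \<union> Y)" "inj_on f2 (X \<union> Y)" "inj_on f3 (X \<union> Y)"
   and R1: "\<And>x y. x\<in>X \<Longrightarrow> y\<in>Y \<Longrightarrow> E x y \<Longrightarrow> f1 y < f1 x \<and> f2 y < f2 x \<and> f3 y < f3 x"
   and R2: "\<And>u w. u\<in>X \<union> Y \<Longrightarrow> w\<in>X \<union> Y \<Longrightarrow> u \<noteq> w \<Longrightarrow> \<not> E u w \<Longrightarrow> f1 u < f1 w \<or> f2 u < f2 w \<or> f3 u < f3 w"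
   and A: "\<And>y w x. y\<in>Y \<Longrightarrow> w\<in>X \<union> Y \<Longrightarrow> w \<noteq> y \<Longrightarrow> \<not> E y w \<Longrightarrow> f1 w < f1 y \<Longrightarrow> f2 w < f2 y \<Longrightarrow> x \<in> X \<Longrightarrow> E y x \<Longrightarrow> f3 x < f3 w"
   and C: "\<And>x w y. x\<in>X \<Longrightarrow> w\<in>X \<union> Y \<Longrightarrow> w \<noteq> x \<Longrightarrow> \<not> E x w \<Longrightarrow> f1 x < f1 w \<Longrightarrow> f3 x < f3 w \<Longrightarrow> y \<in> Y \<Longrightarrow> E x y \<Longrightarrow> f2 w < f2 y"
    using inv unfolding INV_def by blast+
  have vV: "v \<notin> X \<union> Y" using vnew .
  define g1 where "g1 = (\<lambda>z. 2 * f1 z)(v := 2 * f1 v' - 1)"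
  define g2 where "g2 = (\<lambda>z. 2 * f2 z)(v := 2 * f2 v' - 1)"
  define g3 where "g3 = (\<lambda>z. 2 * f3 z)(v := 2 * f3 v' + 1)"
  have gv: "g1 v = 2 * f1 v' - 1" "g2 v = 2 * f2 v' - 1" "g3 v = 2 * f3 v' + 1"
    unfolding g1_def g2_def g3_def by simp_all
  have gz: "g1 z = 2 * f1 z" "g2 z = 2 * f2 z" "g3 z = 2 * f3 z" if "z \<noteq> v" for z
    using that unfolding g1_def g2_def g3_def by simp_all
  have ne: "f1 z \<noteq> f1 v'" "f2 z \<noteq> f2 v'" "f3 z \<noteq> f3 v'" if "z \<in> X \<union> Y" "z \<noteq> v'" for z
    using that v'X I unfolding inj_on_def by blast+
  have tw': "E v w \<longleftrightarrow> E v' w" "E w v \<longleftrightarrow> E w v'" if "w \<in> X \<union> Y" for w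
  proof -
    show "E v w \<longleftrightarrow> E v' w"
    proof (cases "w \<in> Y")
      case True then show ?thesis using tw by blast
    next
      case False then have "w \<in> X" using that by blast
      then show ?thesis using noEXX v'X by blast
    qed
    then show "E w v \<longleftrightarrow> E w v'" using sym by blast
  qed
  have v'V: "v' \<in> X \<union> Y" "v' \<noteq> v" using v'X vnew by auto
  have "INV (insert v X) Y E g1 g2 g3"
    unfolding INV_def
  proof (intro conjI ballI impI allI)
    show "inj_on g1 (insert v X \<union> Y)" unfolding g1_def using inj_ins'[OF I(1) vV] by simp
    show "inj_on g2 (insert v X \<union> Y)" unfolding g2_def using inj_ins'[OF I(2) vV] by simp
    show "inj_on g3 (insert v X \<union> Y)" unfolding g3_def using inj_ins[OF I(3) vV] by simp
  next
    fix x y assume xy: "x \<in> insert v X" "y \<in> Y" "E x y"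
    have yv: "y \<noteq> v" using xy vnew by auto
    have "g1 y < g1 x \<and> g2 y < g2 x \<and> g3 y < g3 x"
    proof (cases "x = v")
      case True
      then have "E v' y" using tw xy by blast
      then have "f1 y < f1 v' \<and> f2 y < f2 v' \<and> f3 y < f3 v'" using R1 v'X xy by blast
      then show ?thesis using gv gz[OF yv] True by simp
    next
      case False
      then have "x \<in> X" using xy by blast
      then have "f1 y < f1 x \<and> f2 y < f2 x \<and> f3 y < f3 x" using R1 xy by blast
      then show ?thesis using gz[OF yv] gz[OF False] by simp
    qed
    then show "g1 y < g1 x" "g2 y < g2 x" "g3 y < g3 x" by simp_all
  next
    fix u w assume uw: "u \<in> insert v X \<union> Y" "w \<in> insert v X \<union> Y" "u \<noteq> w \<and> \<not> E u w"
    show "g1 u < g1 w \<or> g2 u < g2 w \<or> g3 u < g3 w"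
    proof (cases "u = v")
      case True
      then have wv: "w \<noteq> v" "w \<in> X \<union> Y" using uw by auto
      show ?thesis
      proof (cases "w = v'")
        case True then show ?thesis using gv gz[OF wv(1)] \<open>u = v\<close> by simp
      next
        case False
        have "\<not> E v' w" using tw'[OF wv(2)] uw True by simp
        then have "f1 v' < f1 w \<or> f2 v' < f2 w \<or> f3 v' < f3 w" using R2[OF v'V(1) wv(2)] False by metis
        then show ?thesis using gv gz[OF wv(1)] \<open>u = v\<close> by auto
      qed
    next
      case False
      note uF = False
      show ?thesis
      proof (cases "w = v")
        case True
        then have uv: "u \<in> X \<union> Y" using uw uF by auto
        show ?thesis
        proof (cases "u = v'")
          case True then show ?thesis using gv gz[OF uF] \<open>w = v\<close> by simp
        next
          case False
          have "\<not> E u v'" using tw'[OF uv] uw \<open>w = v\<close> by simp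
          then have "f1 u < f1 v' \<or> f2 u < f2 v' \<or> f3 u < f3 v'" using R2[OF uv v'V(1)] False by metis
          then show ?thesis using gv gz[OF uF] \<open>w = v\<close> by auto
        qed
      next
        case False
        then have "u \<in> X \<union> Y" "w \<in> X \<union> Y" using uw uF by auto
        then have "f1 u < f1 w \<or> f2 u < f2 w \<or> f3 u < f3 w" using R2[of u w] uw by blast
        then show ?thesis using gz[OF uF] gz[OF False] by auto
      qed
    qed
  next
    fix y w x assume h: "y \<in> Y" "w \<in> insert v X \<union> Y"
      "w \<noteq> y \<and> \<not> E y w \<and> g1 w < g1 y \<and> g2 w < g2 y" "x \<in> insert v X" "E y x"
    have yv: "y \<noteq> v" using h vnew by auto
    have yV: "y \<in> X \<union> Y" "y \<noteq> v'" using h(1) v'X disj by auto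
    show "g3 x < g3 w"
    proof (cases "w = v")
      case True
      then have xv: "x \<noteq> v" using h by auto
      have nE: "\<not> E y v'" using tw'[OF yV(1)] h True by simp
      have "f1 v' \<le> f1 y" "f2 v' \<le> f2 y" using h(3) True gv gz[OF yv] by simp_all
      then have "f1 v' < f1 y" "f2 v' < f2 y" using ne[OF yV] by auto
      then have "f3 x < f3 v'" using A[OF h(1) v'V(1) _ nE] yV xv h(4,5) by auto
      then show ?thesis using True gv gz[OF xv] by simp
    next
      case False
      then have wV: "w \<in> X \<union> Y" using h by auto
      have "f1 w < f1 y" "f2 w < f2 y" using h(3) gz[OF False] gz[OF yv] by simp_all
      note fw = this
      show ?thesis
      proof (cases "x = v")
        case True
        then have "E y v'" using tw'[OF yV(1)] h(5) by simp
        then have "f3 v' < f3 w" using A[OF h(1) wV _ _ fw v'X] h(3) by blast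
        then show ?thesis using True gv gz[OF False] by simp
      next
        case xF: False
        then have "f3 x < f3 w" using A[OF h(1) wV _ _ fw] h by blast
        then show ?thesis using gz[OF xF] gz[OF False] by simp
      qed
    qed
  next
    fix x w y assume h: "x \<in> insert v X" "w \<in> insert v X \<union> Y"
      "w \<noteq> x \<and> \<not> E x w \<and> g1 x < g1 w \<and> g3 x < g3 w" "y \<in> Y" "E x y"
    have yv: "y \<noteq> v" using h vnew by auto
    show "g2 w < g2 y"
    proof (cases "x = v")
      case True
      then have wv: "w \<noteq> v" "w \<in> X \<union> Y" using h by auto
      have "w \<noteq> v'"
      proof
        assume "w = v'" then show False using h(3) True gv gz[OF wv(1)] by simp
      qed
      have nE: "\<not> E v' w" using tw'[OF wv(2)] h True by simp
      have "f1 v' \<le> f1 w" "f3 v' < f3 w" using h(3) True gv gz[OF wv(1)] by simp_all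
      then have "f1 v' < f1 w" using ne[OF wv(2) \<open>w \<noteq> v'\<close>] by auto
      moreover have "E v' y" using tw h True by blast
      ultimately have "f2 w < f2 y" using C[OF v'X wv(2) _ nE] \<open>w \<noteq> v'\<close> \<open>f3 v' < f3 w\<close> h(4) by metis
      then show ?thesis using gz[OF wv(1)] gz[OF yv] by simp
    next
      case xF: False
      then have xX: "x \<in> X" using h by auto
      show ?thesis
      proof (cases "w = v")
        case True
        have "f1 x < f1 v'" "f3 x \<le> f3 v'" using h(3) True gv gz[OF xF] by simp_all
        then have xv': "x \<noteq> v'" by auto
        then have "f3 x < f3 v'" using \<open>f3 x \<le> f3 v'\<close> ne[of x] xX by auto
        moreover have "\<not> E x v'" using noEXX xX v'X by blast
        ultimately have "f2 v' < f2 y" using C[OF xX v'V(1) _ _ \<open>f1 x < f1 v'\<close>] xv' h(4,5) by metis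
        then show ?thesis using True gv gz[OF yv] by simp
      next
        case False
        then have wV: "w \<in> X \<union> Y" using h by auto
        have "f1 x < f1 w" "f3 x < f3 w" using h(3) gz[OF False] gz[OF xF] by simp_all
        then have "f2 w < f2 y" using C[OF xX wV] h by blast
        then show ?thesis using gz[OF False] gz[OF yv] by simp
      qed
    qed
  qed
  then show ?thesis by blast
qed

lemma ins_pend:
  assumes inv: "INV X Y E f1 f2 f3" and yY: "y \<in> Y" and Evy: "E v y"
    and pend: "\<And>w. w \<in> Y \<Longrightarrow> E v w \<Longrightarrow> w = y"
  shows "\<exists>g1 g2 g3. INV (insert v X) Y E g1 g2 g3"
proof -
  have I: "inj_on f1 (X \<union> Y)" "inj_on f2 (X \<union> Y)" "inj_on f3 (X \<union> Y)"
   and R1: "\<And>x y. x\<in>X \<Longrightarrow> y\<in>Y \<Longrightarrow> E x y \<Longrightarrow> f1 y < f1 x \<and> f2 y < f2 x \<and> f3 y < f3 x"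
   and R2: "\<And>u w. u\<in>X \<union> Y \<Longrightarrow> w\<in>X \<union> Y \<Longrightarrow> u \<noteq> w \<Longrightarrow> \<not> E u w \<Longrightarrow> f1 u < f1 w \<or> f2 u < f2 w \<or> f3 u < f3 w"
   and A: "\<And>y w x. y\<in>Y \<Longrightarrow> w\<in>X \<union> Y \<Longrightarrow> w \<noteq> y \<Longrightarrow> \<not> E y w \<Longrightarrow> f1 w < f1 y \<Longrightarrow> f2 w < f2 y \<Longrightarrow> x \<in> X \<Longrightarrow> E y x \<Longrightarrow> f3 x < f3 w"
   and C: "\<And>x w y. x\<in>X \<Longrightarrow> w\<in>X \<union> Y \<Longrightarrow> w \<noteq> x \<Longrightarrow> \<not> E x w \<Longrightarrow> f1 x < f1 w \<Longrightarrow> f3 x < f3 w \<Longrightarrow> y \<in> Y \<Longrightarrow> E x y \<Longrightarrow> f2 w < f2 y"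
    using inv unfolding INV_def by blast+
  have vV: "v \<notin> X \<union> Y" using vnew .
  have yV: "y \<in> X \<union> Y" "y \<noteq> v" using yY vnew by auto
  define S where "S = insert y {x \<in> X. E y x}"
  have finS: "finite S" unfolding S_def using fin by (auto intro: finite_subset)
  obtain m where mS: "m \<in> S" and mmax: "\<And>t. t \<in> S \<Longrightarrow> f3 t \<le> f3 m"
  proof -
    have "Max (f3 ` S) \<in> f3 ` S" using finS S_def by (intro Max_in) auto
    then obtain m where "m \<in> S" "f3 m = Max (f3 ` S)" by auto
    moreover have "\<And>t. t \<in> S \<Longrightarrow> f3 t \<le> Max (f3 ` S)" using finS by auto
    ultimately show ?thesis using that by auto
  qed
  have mV: "m \<in> X \<union> Y" "m \<noteq> v" using mS yV vnew unfolding S_def by auto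
  have ym: "f3 y \<le> f3 m" using mmax S_def by auto
  have nbr: "w \<in> X \<and> f3 w \<le> f3 m" if "w \<in> X \<union> Y" "E y w" for w
  proof -
    have "w \<in> X" using that yY noEYY by blast
    then show ?thesis using mmax[of w] that unfolding S_def by auto
  qed
  have mN: "E y m" "m \<in> X" if "m \<noteq> y" using mS that unfolding S_def by auto
  have ne: "f1 w \<noteq> f1 z" "f2 w \<noteq> f2 z" "f3 w \<noteq> f3 z" if "w \<in> X \<union> Y" "z \<in> X \<union> Y" "w \<noteq> z" for w z
    using that I unfolding inj_on_def by blast+
  have FA: "f1 y < f1 w \<or> f2 y < f2 w \<or> f3 m < f3 w" if wV: "w \<in> X \<union> Y" "w \<noteq> y" for w
  proof (cases "E y w")
    case True
    then have "w \<in> X" using nbr wV by blast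
    then show ?thesis using R1[OF _ yY] sym[OF True] by blast
  next
    case False
    show ?thesis
    proof (rule ccontr)
      assume c: "\<not> ?thesis"
      then have "f1 w < f1 y" "f2 w < f2 y" using ne[OF wV(1) yV(1) wV(2)] by auto
      then have a: "\<And>x. x \<in> X \<Longrightarrow> E y x \<Longrightarrow> f3 x < f3 w" using A[OF yY wV(1) wV(2) False] by blast
      have "f3 y < f3 w" using R2[OF yV(1) wV(1)] wV(2) False c by auto
      moreover have "m \<noteq> y \<Longrightarrow> f3 m < f3 w" using a mN by blast
      ultimately show False using c by (cases "m = y") auto
    qed
  qed
  have FB: "f1 w < f1 y \<or> f2 w < f2 y \<or> f3 w \<le> f3 m" if wV: "w \<in> X \<union> Y" "w \<noteq> y" for w
  proof (cases "E y w")
    case True then show ?thesis using nbr wV by blast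
  next
    case False
    then have "\<not> E w y" using sym by blast
    then have "f1 w < f1 y \<or> f2 w < f2 y \<or> f3 w < f3 y" using R2[OF wV(1) yV(1)] wV(2) by blast
    then show ?thesis using ym by auto
  qed
  have Ev: "w = y" if "w \<in> insert v X \<union> Y" "E v w" for w
  proof -
    have "w \<in> Y" using cross[OF _ that(1) that(2)] vnew by auto
    then show ?thesis using pend that(2) by blast
  qed
  have Eyv: "E y v" using sym Evy by blast
  define g1 where "g1 = (\<lambda>z. 2 * f1 z)(v := 2 * f1 y + 1)"
  define g2 where "g2 = (\<lambda>z. 2 * f2 z)(v := 2 * f2 y + 1)"
  define g3 where "g3 = (\<lambda>z. 2 * f3 z)(v := 2 * f3 m + 1)"
  have gv: "g1 v = 2 * f1 y + 1" "g2 v = 2 * f2 y + 1" "g3 v = 2 * f3 m + 1"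
    unfolding g1_def g2_def g3_def by simp_all
  have gz: "g1 z = 2 * f1 z" "g2 z = 2 * f2 z" "g3 z = 2 * f3 z" if "z \<noteq> v" for z
    using that unfolding g1_def g2_def g3_def by simp_all
  have "INV (insert v X) Y E g1 g2 g3"
    unfolding INV_def
  proof (intro conjI ballI impI allI)
    show "inj_on g1 (insert v X \<union> Y)" unfolding g1_def using inj_ins[OF I(1) vV] by simp
    show "inj_on g2 (insert v X \<union> Y)" unfolding g2_def using inj_ins[OF I(2) vV] by simp
    show "inj_on g3 (insert v X \<union> Y)" unfolding g3_def using inj_ins[OF I(3) vV] by simp
  next
    fix x y' assume xy: "x \<in> insert v X" "y' \<in> Y" "E x y'"
    have yv: "y' \<noteq> v" using xy vnew by auto
    have "g1 y' < g1 x \<and> g2 y' < g2 x \<and> g3 y' < g3 x"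
    proof (cases "x = v")
      case True
      then have "y' = y" using Ev xy by blast
      then show ?thesis using gv gz[OF yv] True ym by simp
    next
      case False
      then have "x \<in> X" using xy by blast
      then have "f1 y' < f1 x \<and> f2 y' < f2 x \<and> f3 y' < f3 x" using R1 xy by blast
      then show ?thesis using gz[OF yv] gz[OF False] by simp
    qed
    then show "g1 y' < g1 x" "g2 y' < g2 x" "g3 y' < g3 x" by simp_all
  next
    fix u w assume uw: "u \<in> insert v X \<union> Y" "w \<in> insert v X \<union> Y" "u \<noteq> w \<and> \<not> E u w"
    show "g1 u < g1 w \<or> g2 u < g2 w \<or> g3 u < g3 w"
    proof (cases "u = v")
      case True
      then have wv: "w \<noteq> v" "w \<in> X \<union> Y" using uw by auto
      have "w \<noteq> y" using uw True Evy by blast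
      then have "f1 y < f1 w \<or> f2 y < f2 w \<or> f3 m < f3 w" using FA wv by blast
      then show ?thesis using gv gz[OF wv(1)] True by auto
    next
      case False
      note uF = False
      show ?thesis
      proof (cases "w = v")
        case True
        then have uv: "u \<in> X \<union> Y" using uw uF by auto
        have "u \<noteq> y" using uw True Eyv by blast
        then have "f1 u < f1 y \<or> f2 u < f2 y \<or> f3 u \<le> f3 m" using FB uv by blast
        then show ?thesis using gv gz[OF uF] True by auto
      next
        case False
        then have "u \<in> X \<union> Y" "w \<in> X \<union> Y" using uw uF by auto
        then have "f1 u < f1 w \<or> f2 u < f2 w \<or> f3 u < f3 w" using R2[of u w] uw by blast
        then show ?thesis using gz[OF uF] gz[OF False] by auto
      qed
    qed
  next
    fix y0 w x assume h: "y0 \<in> Y" "w \<in> insert v X \<union> Y"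
      "w \<noteq> y0 \<and> \<not> E y0 w \<and> g1 w < g1 y0 \<and> g2 w < g2 y0" "x \<in> insert v X" "E y0 x"
    have y0v: "y0 \<noteq> v" using h vnew by auto
    have y0V: "y0 \<in> X \<union> Y" using h by auto
    show "g3 x < g3 w"
    proof (cases "w = v")
      case True
      have y0y: "y0 \<noteq> y" using h True Eyv by blast
      have xv: "x \<noteq> v" using h True by auto
      have "f1 y < f1 y0" "f2 y < f2 y0" using h(3) True gv gz[OF y0v] by simp_all
      moreover have "\<not> E y0 y" using noEYY h(1) yY by blast
      ultimately have "f3 x < f3 y" using A[OF h(1) yV(1) y0y[symmetric]] xv h(4,5) by blast
      then show ?thesis using True gv gz[OF xv] ym by simp
    next
      case False
      then have wV: "w \<in> X \<union> Y" using h by auto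
      have fw: "f1 w < f1 y0" "f2 w < f2 y0" using h(3) gz[OF False] gz[OF y0v] by simp_all
      show ?thesis
      proof (cases "x = v")
        case True
        then have "y0 = y" using Ev[of y0] h sym by blast
        then have "w \<noteq> y" using h by blast
        then have "f3 m < f3 w" using FA[OF wV] fw \<open>y0 = y\<close> by auto
        then show ?thesis using True gv gz[OF False] by simp
      next
        case xF: False
        then have "f3 x < f3 w" using A[OF h(1) wV _ _ fw] h by blast
        then show ?thesis using gz[OF xF] gz[OF False] by simp
      qed
    qed
  next
    fix x w y0 assume h: "x \<in> insert v X" "w \<in> insert v X \<union> Y"
      "w \<noteq> x \<and> \<not> E x w \<and> g1 x < g1 w \<and> g3 x < g3 w" "y0 \<in> Y" "E x y0"
    have y0v: "y0 \<noteq> v" using h vnew by auto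
    have y0V: "y0 \<in> X \<union> Y" using h by auto
    show "g2 w < g2 y0"
    proof (cases "x = v")
      case True
      then have y0y: "y0 = y" using Ev h by blast
      have wv: "w \<noteq> v" "w \<in> X \<union> Y" using h True by auto
      have wy: "w \<noteq> y" using h True Evy by blast
      have "f1 y < f1 w" "f3 m < f3 w" using h(3) True gv gz[OF wv(1)] by simp_all
      then have "f2 w < f2 y" using FB[OF wv(2) wy] by auto
      then show ?thesis using y0y gz[OF wv(1)] gz[OF y0v] by simp
    next
      case xF: False
      then have xX: "x \<in> X" using h by auto
      have xV: "x \<in> X \<union> Y" using xX by auto
      show ?thesis
      proof (cases "w = v")
        case True
        have "f1 x \<le> f1 y" "f3 x \<le> f3 m" using h(3) True gv gz[OF xF] by simp_all
        have xy: "x \<noteq> y" using xX yY disj by blast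
        then have f1xy: "f1 x < f1 y" using \<open>f1 x \<le> f1 y\<close> ne[OF xV yV(1)] by auto
        have nExy: "\<not> E x y" using R1[OF xX yY] f1xy by auto
        then have y0y: "y0 \<noteq> y" using h by blast
        have "f2 y < f2 y0"
        proof (cases "f3 x < f3 y")
          case True
          then show ?thesis using C[OF xX yV(1) xy[symmetric] nExy f1xy True h(4,5)] by blast
        next
          case False
          then have f3yx: "f3 y < f3 x" using ne[OF xV yV(1) xy] by auto
          show ?thesis
          proof (rule ccontr)
            assume "\<not> f2 y < f2 y0"
            then have "f2 y0 < f2 y" using ne[OF y0V yV(1) y0y] by auto
            moreover have r1: "f1 y0 < f1 x \<and> f2 y0 < f2 x \<and> f3 y0 < f3 x" using R1[OF xX h(4,5)] .
            moreover have "\<not> E y y0" using noEYY yY h(4) by blast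
            ultimately have a: "\<And>x'. x' \<in> X \<Longrightarrow> E y x' \<Longrightarrow> f3 x' < f3 y0"
              using A[OF yY y0V y0y] f1xy by auto
            have "m \<noteq> y" using f3yx \<open>f3 x \<le> f3 m\<close> by auto
            then have "f3 m < f3 y0" using a mN by blast
            then show False using r1 \<open>f3 x \<le> f3 m\<close> by auto
          qed
        qed
        then show ?thesis using True gv gz[OF y0v] by simp
      next
        case False
        then have wV: "w \<in> X \<union> Y" using h by auto
        have "f1 x < f1 w" "f3 x < f3 w" using h(3) gz[OF False] gz[OF xF] by simp_all
        then have "f2 w < f2 y0" using C[OF xX wV] h by blast
        then show ?thesis using gz[OF False] gz[OF y0v] by simp
      qed
    qed
  qed
  then show ?thesis by blast
qed

end



lemma walk_sub:
  assumes "walk_in E S xs" "i \<le> j" "j < length xs"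
  shows "\<exists>ys. walk_in E S ys \<and> hd ys = xs ! i \<and> last ys = xs ! j \<and> length ys = Suc (j - i)"
proof -
  define ys where "ys = map (\<lambda>k. xs ! (i + k)) [0..<Suc (j - i)]"
  have len: "length ys = Suc (j - i)" unfolding ys_def by simp
  have nth: "ys ! k = xs ! (i + k)" if "k < Suc (j - i)" for k
    unfolding ys_def using that by (simp del: upt_Suc)
  have "walk_in E S ys"
    unfolding walk_in_def
  proof (intro conjI allI impI)
    show "ys \<noteq> []" using len by auto
    show "set ys \<subseteq> S"
    proof
      fix z assume "z \<in> set ys"
      then obtain k where k: "k < length ys" "z = ys ! k" by (auto simp: in_set_conv_nth)
      then have "z = xs ! (i + k)" "i + k < length xs" using nth len assms by auto
      then show "z \<in> S" using assms(1) unfolding walk_in_def by auto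
    qed
  next
    fix k assume "Suc k < length ys"
    then have "ys ! k = xs ! (i + k)" "ys ! Suc k = xs ! Suc (i + k)" "Suc (i + k) < length xs"
      using nth len assms by auto
    then show "E (ys ! k) (ys ! Suc k)" using assms(1) unfolding walk_in_def by auto
  qed
  moreover have "hd ys = xs ! i"
  proof -
    have "ys \<noteq> []" using len by auto
    then show ?thesis using nth[of 0] by (simp add: hd_conv_nth)
  qed
  moreover have "last ys = xs ! j"
  proof -
    have "ys \<noteq> []" using len by auto
    moreover have "length ys - 1 = j - i" using len by simp
    ultimately show ?thesis using nth[of "j - i"] assms by (simp add: last_conv_nth)
  qed
  ultimately show ?thesis using len by blast
qed

lemma walk_rev:
  assumes "walk_in E S xs" "\<And>u w. E u w \<Longrightarrow> E w u"
  shows "walk_in E S (rev xs)"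
  unfolding walk_in_def
proof (intro conjI allI impI)
  show "rev xs \<noteq> []" "set (rev xs) \<subseteq> S" using assms(1) unfolding walk_in_def by auto
next
  fix i assume i: "Suc i < length (rev xs)"
  define n where "n = length xs"
  have a: "rev xs ! i = xs ! (n - Suc i)" "rev xs ! Suc i = xs ! (n - Suc (Suc i))"
    using i unfolding n_def by (simp_all add: rev_nth)
  have "E (xs ! (n - Suc (Suc i))) (xs ! Suc (n - Suc (Suc i)))"
    using assms(1) i unfolding walk_in_def n_def by auto
  moreover have "Suc (n - Suc (Suc i)) = n - Suc i" using i unfolding n_def by simp
  ultimately have "E (xs ! (n - Suc (Suc i))) (xs ! (n - Suc i))" by simp
  then have "E (xs ! (n - Suc i)) (xs ! (n - Suc (Suc i)))" using assms(2) by blast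
  then show "E (rev xs ! i) (rev xs ! Suc i)" using a by simp
qed

lemma walk_connected:
  assumes "walk_in E S xs" "set xs = S" "\<And>u w. E u w \<Longrightarrow> E w u"
  shows "connected_in E S"
  unfolding connected_in_def
proof (intro ballI)
  fix p q assume "p \<in> S" "q \<in> S"
  then have "p \<in> set xs" "q \<in> set xs" using assms(2) by auto
  then obtain i j where ij: "i < length xs" "j < length xs" "p = xs ! i" "q = xs ! j"
    by (auto simp: in_set_conv_nth)
  show "\<exists>ys. walk_in E S ys \<and> hd ys = p \<and> last ys = q"
  proof (cases "i \<le> j")
    case True then show ?thesis using walk_sub[OF assms(1) True ij(2)] ij by blast
  next
    case False
    then obtain ys where ys: "walk_in E S ys" "hd ys = q" "last ys = p"
      using walk_sub[OF assms(1) _ ij(1), of j] ij by auto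
    have "walk_in E S (rev ys)" using walk_rev[OF ys(1) assms(3)] .
    moreover have "ys \<noteq> []" using ys(1) unfolding walk_in_def by auto
    ultimately show ?thesis using ys by (auto simp: hd_rev last_rev)
  qed
qed

lemma walk_snoc:
  assumes "walk_in E S xs" "z \<in> S" "E (last xs) z"
  shows "walk_in E S (xs @ [z])"
  unfolding walk_in_def
proof (intro conjI allI impI)
  show "xs @ [z] \<noteq> []" by simp
  show "set (xs @ [z]) \<subseteq> S" using assms unfolding walk_in_def by auto
next
  fix i assume i: "Suc i < length (xs @ [z])"
  show "E ((xs @ [z]) ! i) ((xs @ [z]) ! Suc i)"
  proof (cases "Suc i < length xs")
    case True then show ?thesis using assms(1) unfolding walk_in_def by (auto simp: nth_append)
  next
    case False
    then have "Suc i = length xs" using i by simp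
    moreover have "xs \<noteq> []" using assms(1) unfolding walk_in_def by auto
    moreover have li: "length xs - 1 = i" using \<open>Suc i = length xs\<close> by simp
    ultimately have "xs ! i = last xs" by (simp add: last_conv_nth)
    then show ?thesis using assms(3) \<open>Suc i = length xs\<close> by (simp add: nth_append)
  qed
qed

lemma walk_Cons2:
  "walk_in E S (x # y # xs) \<longleftrightarrow> x \<in> S \<and> E x y \<and> walk_in E S (y # xs)"
proof
  assume w: "walk_in E S (x # y # xs)"
  have "Suc 0 < length (x # y # xs)" by simp
  then have "E ((x # y # xs) ! 0) ((x # y # xs) ! Suc 0)" using w unfolding walk_in_def by blast
  then have "E x y" by simp
  moreover have "walk_in E S (y # xs)"
    unfolding walk_in_def
  proof (intro conjI allI impI)
    show "y # xs \<noteq> []" "set (y # xs) \<subseteq> S" using w unfolding walk_in_def by auto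
  next
    fix i assume "Suc i < length (y # xs)"
    then have "Suc (Suc i) < length (x # y # xs)" by simp
    then have "E ((x # y # xs) ! Suc i) ((x # y # xs) ! Suc (Suc i))" using w unfolding walk_in_def by blast
    then show "E ((y # xs) ! i) ((y # xs) ! Suc i)" by simp
  qed
  ultimately show "x \<in> S \<and> E x y \<and> walk_in E S (y # xs)" using w unfolding walk_in_def by auto
next
  assume h: "x \<in> S \<and> E x y \<and> walk_in E S (y # xs)"
  show "walk_in E S (x # y # xs)"
    unfolding walk_in_def
  proof (intro conjI allI impI)
    show "x # y # xs \<noteq> []" by simp
    show "set (x # y # xs) \<subseteq> S" using h unfolding walk_in_def by auto
  next
    fix i assume i: "Suc i < length (x # y # xs)"
    show "E ((x # y # xs) ! i) ((x # y # xs) ! Suc i)"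
    proof (cases i)
      case 0 then show ?thesis using h by simp
    next
      case (Suc j)
      then have "Suc j < length (y # xs)" using i by simp
      then have "E ((y # xs) ! j) ((y # xs) ! Suc j)" using h unfolding walk_in_def by blast
      then show ?thesis using Suc by simp
    qed
  qed
qed

lemma walk_single: "walk_in E S [x] \<longleftrightarrow> x \<in> S"
  unfolding walk_in_def by simp

lemma walk_lip:
  fixes \<phi> :: "'a \<Rightarrow> int"
  assumes "walk_in E S xs" "\<And>p q. p \<in> S \<Longrightarrow> q \<in> S \<Longrightarrow> E p q \<Longrightarrow> \<phi> q \<le> \<phi> p + 1"
  shows "\<phi> (last xs) \<le> \<phi> (hd xs) + int (length xs - 1)"
proof -
  have ne: "xs \<noteq> []" and sub: "set xs \<subseteq> S" using assms(1) unfolding walk_in_def by auto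
  have step: "\<phi> (xs ! j) \<le> \<phi> (xs ! 0) + int j" if "j < length xs" for j
    using that
  proof (induction j)
    case 0 then show ?case by simp
  next
    case (Suc j)
    then have "E (xs ! j) (xs ! Suc j)" using assms(1) unfolding walk_in_def by blast
    moreover have "xs ! j \<in> S" "xs ! Suc j \<in> S" using Suc.prems sub by auto
    ultimately have "\<phi> (xs ! Suc j) \<le> \<phi> (xs ! j) + 1" using assms(2) by blast
    then show ?case using Suc by simp
  qed
  have "length xs - 1 < length xs" using ne by simp
  from step[OF this] show ?thesis using ne by (simp add: hd_conv_nth last_conv_nth)
qed

lemma dist_le:
  assumes "walk_in E S xs" "hd xs = p" "last xs = q"
  shows "dist_in E S p q \<le> enat (length xs - 1)"
proof -
  have "xs \<in> {xs. walk_in E S xs \<and> hd xs = p \<and> last xs = q}" using assms by blast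
  then show ?thesis unfolding dist_in_def by (rule INF_lower)
qed

lemma dist_ge:
  assumes "\<And>xs. walk_in E S xs \<Longrightarrow> hd xs = p \<Longrightarrow> last xs = q \<Longrightarrow> m \<le> length xs - 1"
  shows "enat m \<le> dist_in E S p q"
  unfolding dist_in_def
proof (rule INF_greatest)
  fix xs assume "xs \<in> {xs. walk_in E S xs \<and> hd xs = p \<and> last xs = q}"
  then have "m \<le> length xs - 1" using assms by blast
  then show "enat m \<le> enat (length xs - 1)" by simp
qed

lemma walk_mono: "walk_in E S xs \<Longrightarrow> S \<subseteq> T \<Longrightarrow> walk_in E T xs"
  unfolding walk_in_def by auto

lemma dist_mono:
  assumes "S \<subseteq> T"
  shows "dist_in E T p q \<le> dist_in E S p q"
  unfolding dist_in_def
proof (rule INF_superset_mono)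
  show "{xs. walk_in E S xs \<and> hd xs = p \<and> last xs = q} \<subseteq> {xs. walk_in E T xs \<and> hd xs = p \<and> last xs = q}"
    using walk_mono[OF _ assms] by blast
qed simp

lemma dh_subset:
  assumes "distance_hereditary V E" "V' \<subseteq> V"
  shows "distance_hereditary V' E"
  unfolding distance_hereditary_def
proof (intro allI impI ballI)
  fix S u w assume S: "S \<subseteq> V' \<and> connected_in E S" "u \<in> S" "w \<in> S"
  have SV: "S \<subseteq> V \<and> connected_in E S" using S assms(2) by blast
  have "\<forall>u\<in>S. \<forall>v\<in>S. dist_in E S u v = dist_in E V u v"
    using assms(1) SV unfolding distance_hereditary_def by (elim allE impE) auto
  then have 1: "dist_in E S u w = dist_in E V u w" using S(2,3) by blast
  have 2: "dist_in E V u w \<le> dist_in E V' u w" by (rule dist_mono[OF assms(2)])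
  have 3: "dist_in E V' u w \<le> dist_in E S u w" by (rule dist_mono) (use S in blast)
  show "dist_in E S u w = dist_in E V' u w" using 1 2 3 by (metis order_antisym)
qed




locale bdh =
  fixes V X Y :: "'a set" and E :: "'a \<Rightarrow> 'a \<Rightarrow> bool"
  assumes finV: "finite V" and VXY: "V = X \<union> Y" and disj: "X \<inter> Y = {}"
    and sym: "\<And>u w. E u w \<Longrightarrow> E w u"
    and cross: "\<And>u w. u \<in> V \<Longrightarrow> w \<in> V \<Longrightarrow> E u w \<Longrightarrow> (u \<in> X \<and> w \<in> Y) \<or> (u \<in> Y \<and> w \<in> X)"
    and dh: "distance_hereditary V E"
begin

definition reach :: "'a \<Rightarrow> 'a \<Rightarrow> bool" where
  "reach r t \<longleftrightarrow> (\<exists>xs. walk_in E V xs \<and> hd xs = r \<and> last xs = t)"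

definition d :: "'a \<Rightarrow> 'a \<Rightarrow> nat" where
  "d r t = (LEAST n. \<exists>xs. walk_in E V xs \<and> hd xs = r \<and> last xs = t \<and> length xs = Suc n)"

lemma geo:
  assumes "reach r t"
  shows "\<exists>xs. walk_in E V xs \<and> hd xs = r \<and> last xs = t \<and> length xs = Suc (d r t)"
proof -
  obtain xs where xs: "walk_in E V xs" "hd xs = r" "last xs = t" using assms unfolding reach_def by blast
  then have "length xs = Suc (length xs - 1)" unfolding walk_in_def by auto
  then have "\<exists>n. \<exists>xs. walk_in E V xs \<and> hd xs = r \<and> last xs = t \<and> length xs = Suc n" using xs by blast
  then show ?thesis unfolding d_def by (rule LeastI_ex)
qed

lemma d_le:
  assumes "walk_in E V xs" "hd xs = r" "last xs = t"
  shows "d r t \<le> length xs - 1"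
proof -
  have "length xs = Suc (length xs - 1)" using assms unfolding walk_in_def by auto
  then have "\<exists>ys. walk_in E V ys \<and> hd ys = r \<and> last ys = t \<and> length ys = Suc (length xs - 1)"
    using assms by blast
  then show ?thesis unfolding d_def by (rule Least_le)
qed

lemma reach_V: "reach r t \<Longrightarrow> t \<in> V"
  unfolding reach_def walk_in_def by auto

lemma reach_r: "r \<in> V \<Longrightarrow> reach r r \<and> d r r = 0"
proof -
  assume r: "r \<in> V"
  have w: "walk_in E V [r]" using r by (simp add: walk_single)
  then have "reach r r" unfolding reach_def by force
  moreover have "d r r \<le> 0" using d_le[OF w] by simp
  ultimately show ?thesis by simp
qed

lemma reach_step:
  assumes "reach r t" "E t s" "s \<in> V"
  shows "reach r s \<and> d r s \<le> d r t + 1"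
proof -
  obtain xs where xs: "walk_in E V xs" "hd xs = r" "last xs = t" "length xs = Suc (d r t)"
    using geo[OF assms(1)] by blast
  have w: "walk_in E V (xs @ [s])" using walk_snoc[OF xs(1) assms(3)] xs(3) assms(2) by simp
  have ne: "xs \<noteq> []" using xs(4) by auto
  have h: "hd (xs @ [s]) = r" using ne xs(2) by simp
  have "reach r s" unfolding reach_def using w h by force
  moreover have "d r s \<le> length (xs @ [s]) - 1" using d_le[OF w h] by simp
  ultimately show ?thesis using xs(4) by simp
qed

lemma geo_pos:
  assumes "walk_in E V xs" "hd xs = r" "j < length xs"
  shows "reach r (xs ! j) \<and> d r (xs ! j) \<le> j"
proof -
  obtain ys where ys: "walk_in E V ys" "hd ys = xs ! 0" "last ys = xs ! j" "length ys = Suc (j - 0)"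
    using walk_sub[OF assms(1) _ assms(3), of 0] by auto
  have "xs \<noteq> []" using assms(1) unfolding walk_in_def by auto
  then have "xs ! 0 = r" using assms(2) by (simp add: hd_conv_nth)
  then have h: "hd ys = r" using ys(2) by simp
  have "reach r (xs ! j)" unfolding reach_def using ys(1,3) h by blast
  moreover have "d r (xs ! j) \<le> length ys - 1" using d_le[OF ys(1) h ys(3)] .
  ultimately show ?thesis using ys(4) by simp
qed

lemma d0:
  assumes "reach r t" "d r t = 0"
  shows "t = r"
proof -
  obtain xs where xs: "walk_in E V xs" "hd xs = r" "last xs = t" "length xs = Suc (d r t)"
    using geo[OF assms(1)] by blast
  then have "length xs = 1" using assms(2) by simp
  then obtain x where "xs = [x]" by (cases xs) auto
  then show ?thesis using xs by simp
qed

lemma pred: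
  assumes "reach r t" "0 < d r t"
  shows "\<exists>s. reach r s \<and> E s t \<and> d r s + 1 = d r t"
proof -
  obtain xs where xs: "walk_in E V xs" "hd xs = r" "last xs = t" "length xs = Suc (d r t)"
    using geo[OF assms(1)] by blast
  define n where "n = d r t"
  have n: "0 < n" using assms(2) n_def by simp
  have lt: "n - 1 < length xs" "Suc (n - 1) < length xs" using xs(4) n n_def by auto
  have e: "E (xs ! (n - 1)) (xs ! Suc (n - 1))" using xs(1) lt(2) unfolding walk_in_def by blast
  have "xs ! Suc (n - 1) = last xs"
  proof -
    have "xs \<noteq> []" using xs(4) by auto
    moreover have "Suc (n - 1) = length xs - 1" using xs(4) n n_def by simp
    ultimately show ?thesis by (simp add: last_conv_nth)
  qed
  then have e': "E (xs ! (n - 1)) t" using e xs(3) by simp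
  have p: "reach r (xs ! (n - 1)) \<and> d r (xs ! (n - 1)) \<le> n - 1" using geo_pos[OF xs(1,2) lt(1)] .
  have "d r t \<le> d r (xs ! (n - 1)) + 1" using reach_step[OF conjunct1[OF p] e'] reach_V[OF assms(1)] by blast
  then have "d r (xs ! (n - 1)) + 1 = d r t" using conjunct2[OF p] n n_def by linarith
  then show ?thesis using p e' by blast
qed

lemma parity:
  assumes "walk_in E V xs" "j < length xs"
  shows "xs ! j \<in> X \<longleftrightarrow> (xs ! 0 \<in> X \<longleftrightarrow> even j)"
  using assms(2)
proof (induction j)
  case 0 then show ?case by simp
next
  case (Suc j)
  have e: "E (xs ! j) (xs ! Suc j)" using assms(1) Suc.prems unfolding walk_in_def by blast
  have "xs ! j \<in> V" "xs ! Suc j \<in> V" using assms(1) Suc.prems unfolding walk_in_def by auto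
  then have "xs ! Suc j \<in> X \<longleftrightarrow> xs ! j \<notin> X" using cross[OF _ _ e] disj by blast
  then show ?case using Suc by simp
qed

lemma side:
  assumes "reach r t"
  shows "t \<in> X \<longleftrightarrow> (r \<in> X \<longleftrightarrow> even (d r t))"
proof -
  obtain xs where xs: "walk_in E V xs" "hd xs = r" "last xs = t" "length xs = Suc (d r t)"
    using geo[OF assms(1)] by blast
  have ne: "xs \<noteq> []" using xs(4) by auto
  have "xs ! 0 = r" using xs(2) ne by (simp add: hd_conv_nth)
  moreover have "xs ! d r t = t" using xs(3,4) ne by (simp add: last_conv_nth)
  moreover have "d r t < length xs" using xs(4) by simp
  ultimately show ?thesis using parity[OF xs(1), of "d r t"] by simp
qed

lemma d_neq:
  assumes "reach r s" "reach r t" "E s t"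
  shows "d r s \<noteq> d r t"
proof
  assume eq: "d r s = d r t"
  have "s \<in> X \<longleftrightarrow> t \<in> X" using side[OF assms(1)] side[OF assms(2)] eq by simp
  moreover have "s \<in> V" "t \<in> V" using reach_V assms by auto
  ultimately show False using cross[OF _ _ assms(3)] disj by blast
qed

lemma d_adj:
  assumes "reach r s" "E s t" "t \<in> V"
  shows "reach r t \<and> (d r t = d r s + 1 \<or> d r s = d r t + 1)"
proof -
  have 1: "reach r t" "d r t \<le> d r s + 1" using reach_step[OF assms] by auto
  have "d r s \<le> d r t + 1" using reach_step[OF 1(1) sym[OF assms(2)] reach_V[OF assms(1)]] by blast
  moreover have "d r s \<noteq> d r t" using d_neq[OF assms(1) 1(1) assms(2)] .
  ultimately show ?thesis using 1 by linarith
qed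

lemma dist_d:
  assumes "reach r t"
  shows "dist_in E V r t = enat (d r t)"
proof -
  obtain xs where xs: "walk_in E V xs" "hd xs = r" "last xs = t" "length xs = Suc (d r t)"
    using geo[OF assms(1)] by blast
  have "dist_in E V r t \<le> enat (d r t)" using dist_le[OF xs(1,2,3)] xs(4) by simp
  moreover have "enat (d r t) \<le> dist_in E V r t"
    by (rule dist_ge) (use d_le in blast)
  ultimately show ?thesis by (rule order_antisym)
qed

lemma dh_eq:
  assumes "S \<subseteq> V" "connected_in E S" "p \<in> S" "q \<in> S"
  shows "dist_in E S p q = dist_in E V p q"
proof -
  have "\<forall>u\<in>S. \<forall>v\<in>S. dist_in E S u v = dist_in E V u v"
    using dh assms(1,2) unfolding distance_hereditary_def by (elim allE impE) auto
  then show ?thesis using assms(3,4) by blast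
qed

lemma hang:
  assumes ru: "reach r u" and rw: "reach r w" and rz: "reach r z" and ra: "reach r a"
    and du: "d r u = i" and dw: "d r w = i" and dz: "d r z = Suc i" and da: "Suc (d r a) = i"
    and Ezu: "E z u" and Ezw: "E z w" and Eau: "E a u"
  shows "E a w"
proof (rule ccontr)
  assume nE: "\<not> E a w"
  obtain g where g: "walk_in E V g" "hd g = r" "last g = a" "length g = Suc (d r a)"
    using geo[OF ra] by blast
  have gne: "g \<noteq> []" using g(4) by auto
  have uV: "u \<in> V" and zV: "z \<in> V" and wV: "w \<in> V" using reach_V ru rz rw by auto
  have w1: "walk_in E V (g @ [u])" using walk_snoc[OF g(1) uV] g(3) Eau by simp
  have w2: "walk_in E V ((g @ [u]) @ [z])" using walk_snoc[OF w1 zV] sym[OF Ezu] by simp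
  have w3: "walk_in E V (((g @ [u]) @ [z]) @ [w])" using walk_snoc[OF w2 wV] Ezw by simp
  define W where "W = ((g @ [u]) @ [z]) @ [w]"
  define S where "S = set W"
  have SV: "S \<subseteq> V" using w3 unfolding S_def W_def walk_in_def by blast
  have wS: "walk_in E S W" using w3 unfolding W_def S_def walk_in_def by blast
  have conn: "connected_in E S" using walk_connected[OF wS _ sym] S_def by blast
  have Sdef: "S = set g \<union> {u, z, w}" unfolding S_def W_def by auto
  have rg: "r \<in> set g" using hd_in_set[OF gne] g(2) by simp
  have rS: "r \<in> S" using rg Sdef by blast
  have wS': "w \<in> S" using Sdef by auto
  have gfact: "reach r t \<and> d r t \<le> d r a \<and> (d r t = d r a \<longrightarrow> t = a)" if tg: "t \<in> set g" for t
  proof -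
    obtain j where j: "j < length g" "t = g ! j" using tg by (metis in_set_conv_nth)
    have p: "reach r t \<and> d r t \<le> j" using geo_pos[OF g(1,2) j(1)] j(2) by simp
    have "j \<le> d r a" using j(1) g(4) by simp
    moreover have "d r t = d r a \<longrightarrow> t = a"
    proof
      assume "d r t = d r a"
      then have "j = d r a" using p \<open>j \<le> d r a\<close> by simp
      then have "j = length g - 1" using g(4) by simp
      then show "t = a" using j(2) g(3) gne by (simp add: last_conv_nth)
    qed
    ultimately show ?thesis using p by simp
  qed
  have notin: "t \<noteq> u \<and> t \<noteq> z \<and> t \<noteq> w" if tg: "t \<in> set g" for t
  proof -
    have "d r t \<le> d r a" using gfact[OF tg] by blast
    then show ?thesis using du dz dw da by auto
  qed
  have uz: "u \<noteq> z" "u \<noteq> w" "z \<noteq> w \<or> True" using du dz Eau nE by auto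
  define \<phi> where "\<phi> t = (if t = u then int i else if t = z \<or> t = w then int i + 1 else int (d r t))" for t
  have \<phi>u: "\<phi> u = int i" and \<phi>z: "\<phi> z = int i + 1" and \<phi>w: "\<phi> w = int i + 1"
    unfolding \<phi>_def using uz by auto
  have \<phi>g: "\<phi> t = int (d r t)" if "t \<in> set g" for t
    unfolding \<phi>_def using notin[OF that] by simp
  have lip: "\<phi> q \<le> \<phi> p + 1" if pq: "p \<in> S" "q \<in> S" "E p q" for p q
  proof (cases "p \<in> set g")
    case pg: True
    have gp1: "reach r p" and gp2: "d r p \<le> d r a" and gp3: "d r p = d r a \<Longrightarrow> p = a"
      using gfact[OF pg] by blast+
    have qV: "q \<in> V" using SV pq(2) by blast
    have adj: "d r q = d r p + 1 \<or> d r p = d r q + 1" using d_adj[OF gp1 pq(3) qV] by blast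
    show ?thesis
    proof (cases "q \<in> set g")
      case True
      have "\<phi> q = int (d r q)" "\<phi> p = int (d r p)" using \<phi>g[OF True] \<phi>g[OF pg] by blast+
      then show ?thesis using adj by auto
    next
      case False
      then have qc: "q = u \<or> q = z \<or> q = w" using pq(2) Sdef by blast
      show ?thesis
      proof (rule disjE[OF qc])
        assume qu: "q = u"
        then have "i \<le> d r p + 1" using adj du by auto
        then show ?thesis using qu \<phi>u \<phi>g[OF pg] by simp
      next
        assume "q = z \<or> q = w"
        then show ?thesis
        proof
          assume "q = z"
          then have "d r z = d r p + 1 \<or> d r p = d r z + 1" using adj by simp
          then show ?thesis using dz da gp2 by auto
        next
          assume qw: "q = w"
          then have "d r w = d r p + 1 \<or> d r p = d r w + 1" using adj by simp
          then have "d r p = d r a" using dw da gp2 by auto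
          then have "p = a" by (rule gp3)
          then show ?thesis using nE pq(3) qw by simp
        qed
      qed
    qed
  next
    case False
    then have pp: "p = u \<or> p = z \<or> p = w" using pq(1) Sdef by blast
    have "int i \<le> \<phi> p" using pp \<phi>u \<phi>z \<phi>w by auto
    moreover have "\<phi> q \<le> int i + 1"
    proof (cases "q \<in> set g")
      case True
      have "d r q \<le> d r a" using gfact[OF True] by blast
      then show ?thesis using \<phi>g[OF True] da by simp
    next
      case False
      then have "q = u \<or> q = z \<or> q = w" using pq(2) Sdef by blast
      then show ?thesis using \<phi>u \<phi>z \<phi>w by auto
    qed
    ultimately show ?thesis by simp
  qed
  have "enat (Suc i) \<le> dist_in E S r w"
  proof (rule dist_ge)
    fix ys assume ys: "walk_in E S ys" "hd ys = r" "last ys = w"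
    have "\<phi> (last ys) \<le> \<phi> (hd ys) + int (length ys - 1)" by (rule walk_lip[OF ys(1)], rule lip, assumption+)
    moreover have "\<phi> r = 0"
    proof -
      have "r \<in> V" using rS SV by blast
      then have "d r r = 0" using reach_r by blast
      then show ?thesis using \<phi>g[OF rg] by simp
    qed
    ultimately show "Suc i \<le> length ys - 1" using ys \<phi>w by simp
  qed
  moreover have "dist_in E S r w = dist_in E V r w" using dh_eq[OF SV conn rS wS'] .
  moreover have "dist_in E V r w = enat i" using dist_d[OF rw] dw by simp
  ultimately show False by simp
qed

lemma lam:
  assumes rv: "reach r v" and rs: "reach r s" and rw1: "reach r w1" and rw2: "reach r w2" and ra: "reach r a'"
    and dv: "d r v = k" and ds: "d r s = k" and dw1: "d r w1 + 1 = k" and dw2: "d r w2 + 1 = k"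
    and da: "d r a' + 1 = k"
    and Evw1: "E v w1" and Esw1: "E s w1" and Evw2: "E v w2" and nEsw2: "\<not> E s w2"
    and Esa: "E s a'" and nEva: "\<not> E v a'"
  shows False
proof (cases "d r w1 = 0")
  case True
  then have "w1 = r" "w2 = r" using d0 rw1 rw2 dw1 dw2 by auto
  then show False using Esw1 nEsw2 by simp
next
  case False
  then obtain u where ru: "reach r u" and Euw1: "E u w1" and du: "d r u + 1 = d r w1"
    using pred[OF rw1] by blast
  have Euw2: "E u w2"
    by (rule hang[OF rw1 rw2 rv ru refl]) (use dw1 dw2 dv du Evw1 Evw2 Euw1 in auto)
  have Eua: "E u a'"
    by (rule hang[OF rw1 ra rs ru refl]) (use dw1 da ds du Esw1 Esa Euw1 in auto)
  have V: "v \<in> V" "s \<in> V" "w1 \<in> V" "w2 \<in> V" "a' \<in> V" "u \<in> V"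
    using reach_V rv rs rw1 rw2 ra ru by auto
  define W where "W = [v, w2, u, a', s]"
  have wW: "walk_in E V W" unfolding W_def
    using V Evw2 sym[OF Euw2] Eua sym[OF Esa] by (simp add: walk_Cons2 walk_single)
  define S where "S = set W"
  have SV: "S \<subseteq> V" unfolding S_def W_def using V by auto
  have wS: "walk_in E S W" using wW unfolding S_def walk_in_def by blast
  have conn: "connected_in E S" using walk_connected[OF wS _ sym] S_def by blast
  have vS: "v \<in> S" and sS: "s \<in> S" unfolding S_def W_def by auto
  have "dist_in E V v s \<le> enat 2"
  proof -
    have "walk_in E V [v, w1, s]" using V Evw1 sym[OF Esw1] by (simp add: walk_Cons2 walk_single)
    from dist_le[OF this, of v s] show ?thesis by (simp add: numeral_2_eq_2)
  qed
  have dne: "d r u + 2 = k" using du dw1 by simp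
  have n1: "\<not> E v u" using d_adj[OF rv _ V(6)] dv dne by auto
  have n2: "\<not> E v s" using d_neq[OF rv rs] dv ds by auto
  have n3: "\<not> E w2 a'" using d_neq[OF rw2 ra] dw2 da by auto
  have n4: "\<not> E w2 s" using nEsw2 sym by blast
  have n5: "\<not> E u s" using d_adj[OF ru _ V(2)] ds dne by auto
  have ne: "v \<noteq> w2" "v \<noteq> u" "v \<noteq> a'" "v \<noteq> s" "w2 \<noteq> u" "w2 \<noteq> a'" "w2 \<noteq> s" "u \<noteq> a'" "u \<noteq> s" "a' \<noteq> s"
    using dv ds dw2 da dne Evw2 nEsw2 nEva by auto
  define \<phi> :: "'a \<Rightarrow> int" where
    "\<phi> t = (if t = v then 0 else if t = w2 then 1 else if t = u then 2 else if t = a' then 3 else 4)" for t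
  have \<phi>: "\<phi> v = 0" "\<phi> w2 = 1" "\<phi> u = 2" "\<phi> a' = 3" "\<phi> s = 4"
    unfolding \<phi>_def using ne by auto
  have Sd: "S = {v, w2, u, a', s}" unfolding S_def W_def by auto
  have lip: "\<phi> q \<le> \<phi> p + 1" if pq: "p \<in> S" "q \<in> S" "E p q" for p q
  proof -
    have "p = v \<or> p = w2 \<or> p = u \<or> p = a' \<or> p = s" "q = v \<or> q = w2 \<or> q = u \<or> q = a' \<or> q = s"
      using pq(1,2) Sd by blast+
    then show ?thesis using pq(3) \<phi> n1 n2 n3 n4 n5 nEva by auto
  qed
  have "enat 4 \<le> dist_in E S v s"
  proof (rule dist_ge)
    fix ys assume ys: "walk_in E S ys" "hd ys = v" "last ys = s"
    have "\<phi> (last ys) \<le> \<phi> (hd ys) + int (length ys - 1)"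
      by (rule walk_lip[OF ys(1)], rule lip, assumption+)
    then show "4 \<le> length ys - 1" using ys \<phi> by simp
  qed
  moreover have "dist_in E S v s = dist_in E V v s" using dh_eq[OF SV conn vS sS] .
  ultimately have "enat 4 \<le> enat 2" using \<open>dist_in E V v s \<le> enat 2\<close> by (metis order_trans)
  then show False by simp
qed

lemma struct:
  assumes "V \<noteq> {}"
  shows "\<exists>v\<in>V. (\<forall>w\<in>V. \<not> E v w) \<or> (\<exists>y\<in>V. E v y \<and> (\<forall>w\<in>V. E v w \<longrightarrow> w = y))
               \<or> (\<exists>v'\<in>V. v' \<noteq> v \<and> (\<forall>w\<in>V. E v w \<longleftrightarrow> E v' w))"
proof (cases "\<exists>v\<in>V. \<forall>w\<in>V. \<not> E v w")
  case True then show ?thesis by blast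
next
  case False
  then have noiso: "\<exists>w\<in>V. E t w" if "t \<in> V" for t using that by blast
  obtain r where rV: "r \<in> V" using assms by blast
  define C where "C = {t \<in> V. reach r t}"
  have finC: "finite C" unfolding C_def using finV by simp
  have rC: "r \<in> C" unfolding C_def using rV reach_r by blast
  define k where "k = Max (d r ` C)"
  have dmax: "d r t \<le> k" if "t \<in> C" for t unfolding k_def using finC that by simp
  have "k \<in> d r ` C" unfolding k_def using finC rC by (intro Max_in) auto
  then obtain v0 where v0: "v0 \<in> C" "d r v0 = k" by auto
  define Lk where "Lk = {t \<in> C. d r t = k}"
  define Nb where "Nb t = {w \<in> V. E t w}" for t
  have finNb: "finite (Nb t)" for t unfolding Nb_def using finV by simp
  have "v0 \<in> Lk" unfolding Lk_def using v0 by simp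
  then obtain v where vL: "v \<in> Lk" and vmin: "\<And>t. t \<in> Lk \<Longrightarrow> card (Nb v) \<le> card (Nb t)"
    using ex_has_least_nat[of "\<lambda>t. t \<in> Lk" v0 "\<lambda>t. card (Nb t)"] by blast
  have nbL: "reach r w \<and> d r w + 1 = k" if tL: "t \<in> Lk" and wV: "w \<in> V" and Etw: "E t w" for t w
  proof -
    have rt: "reach r t" "d r t = k" using tL unfolding Lk_def C_def by auto
    have a: "reach r w \<and> (d r w = d r t + 1 \<or> d r t = d r w + 1)" using d_adj[OF rt(1) Etw wV] .
    then have "w \<in> C" unfolding C_def using wV by blast
    then have "d r w \<le> k" using dmax by blast
    then show ?thesis using a rt(2) by auto
  qed
  have vV: "v \<in> V" and rv: "reach r v" and dv: "d r v = k" using vL unfolding Lk_def C_def by auto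
  have Nbne: "Nb v \<noteq> {}" using noiso[OF vV] unfolding Nb_def by blast
  show ?thesis
  proof (cases "card (Nb v) = 1")
    case True
    then obtain y where "Nb v = {y}" by (rule card_1_singletonE)
    then have "y \<in> V" "E v y" "\<forall>w\<in>V. E v w \<longrightarrow> w = y" unfolding Nb_def by auto
    then show ?thesis using vV by blast
  next
    case False
    obtain w1 where w1: "w1 \<in> Nb v" using Nbne by blast
    have "Nb v - {w1} \<noteq> {}"
    proof
      assume "Nb v - {w1} = {}"
      then have "Nb v = {w1}" using w1 by blast
      then show False using False by simp
    qed
    then obtain w2 where w2: "w2 \<in> Nb v" "w2 \<noteq> w1" by blast
    have claim: "E w' s" if ww: "w \<in> Nb v" "w' \<in> Nb v" and sV: "s \<in> V" and Ews: "E w s" for w w' s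
    proof -
      have wV: "w \<in> V" "E v w" "w' \<in> V" "E v w'" using ww unfolding Nb_def by auto
      have rw: "reach r w" "d r w + 1 = k" using nbL[OF vL wV(1,2)] by auto
      have rw': "reach r w'" "d r w' + 1 = k" using nbL[OF vL wV(3,4)] by auto
      have a: "reach r s \<and> (d r s = d r w + 1 \<or> d r w = d r s + 1)" using d_adj[OF rw(1) Ews sV] .
      show ?thesis
      proof (cases "d r w = d r s + 1")
        case True
        have "E s w'"
          by (rule hang[OF rw(1) rw'(1) rv conjunct1[OF a] refl])
             (use rw rw' dv True wV sym[OF Ews] in auto)
        then show ?thesis using sym by blast
      next
        case False
        then have dsk: "d r s = k" using a rw by auto
        have sL: "s \<in> Lk" unfolding Lk_def C_def using sV a dsk by blast
        show ?thesis
        proof (rule ccontr)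
          assume nE: "\<not> E w' s"
          then have nE': "\<not> E s w'" using sym by blast
          have "\<not> Nb s \<subseteq> Nb v"
          proof
            assume sub: "Nb s \<subseteq> Nb v"
            have "w' \<notin> Nb s" using nE' unfolding Nb_def by blast
            then have "Nb s \<subset> Nb v" using sub ww(2) by blast
            then have "card (Nb s) < card (Nb v)" using finNb psubset_card_mono by blast
            then show False using vmin[OF sL] by simp
          qed
          then obtain a' where a': "a' \<in> Nb s" "a' \<notin> Nb v" by blast
          have a'V: "a' \<in> V" "E s a'" "\<not> E v a'" using a' unfolding Nb_def by auto
          have ra: "reach r a'" "d r a' + 1 = k" using nbL[OF sL a'V(1,2)] by auto
          show False
            by (rule lam[OF rv conjunct1[OF a] rw(1) rw'(1) ra(1) dv dsk rw(2) rw'(2) ra(2)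
                  wV(2) sym[OF Ews] wV(4) nE' a'V(2) a'V(3)])
        qed
      qed
    qed
    have "\<forall>s\<in>V. E w1 s \<longleftrightarrow> E w2 s" using claim[OF w1 w2(1)] claim[OF w2(1) w1] by blast
    moreover have "w1 \<in> V" "w2 \<in> V" using w1 w2 unfolding Nb_def by auto
    ultimately show ?thesis using w2(2) by blast
  qed
qed

end



lemma step:
  assumes fin: "finite (X \<union> Y)" and dsj: "X \<inter> Y = {}" and sym: "\<And>u w. E u w \<Longrightarrow> E w u"
    and crs: "\<And>u w. u \<in> X \<union> Y \<Longrightarrow> w \<in> X \<union> Y \<Longrightarrow> E u w \<Longrightarrow> (u \<in> X \<and> w \<in> Y) \<or> (u \<in> Y \<and> w \<in> X)"
    and vX: "v \<in> X" and IH: "INV (X - {v}) Y E f1 f2 f3"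
    and H: "(\<forall>w\<in>X \<union> Y. \<not> E v w) \<or> (\<exists>y\<in>X \<union> Y. E v y \<and> (\<forall>w\<in>X \<union> Y. E v w \<longrightarrow> w = y))
               \<or> (\<exists>v'\<in>X \<union> Y. v' \<noteq> v \<and> (\<forall>w\<in>X \<union> Y. E v w \<longleftrightarrow> E v' w))"
  shows "\<exists>g1 g2 g3. INV X Y E g1 g2 g3"
proof -
  have Xeq: "insert v (X - {v}) = X" using vX by blast
  have vY: "v \<notin> Y" using vX dsj by blast
  interpret ins "X - {v}" Y E v
  proof
    show "\<And>u w. E u w \<Longrightarrow> E w u" by (rule sym)
    show "(X - {v}) \<inter> Y = {}" using dsj by blast
    show "v \<notin> X - {v} \<union> Y" using vY by blast
    show "finite (X - {v} \<union> Y)" by (rule finite_subset[OF _ fin]) blast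
  next
    fix u w assume a: "u \<in> insert v (X - {v}) \<union> Y" "w \<in> insert v (X - {v}) \<union> Y" "E u w"
    have "u \<in> X \<union> Y" "w \<in> X \<union> Y" using a(1,2) Xeq by auto
    then have "(u \<in> X \<and> w \<in> Y) \<or> (u \<in> Y \<and> w \<in> X)" using crs a(3) by blast
    then show "(u \<in> insert v (X - {v}) \<and> w \<in> Y) \<or> (u \<in> Y \<and> w \<in> insert v (X - {v}))"
      unfolding Xeq .
  qed
  have vV: "v \<in> X \<union> Y" using vX by blast
  have isoC: ?thesis if iso: "\<forall>w\<in>X \<union> Y. \<not> E v w"
  proof -
    have "\<And>w. w \<in> Y \<Longrightarrow> \<not> E v w" using iso by blast
    from ins_iso[OF IH this] show ?thesis by (simp only: Xeq)
  qed
  show ?thesis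
  proof (cases "\<forall>w\<in>X \<union> Y. \<not> E v w")
    case True then show ?thesis by (rule isoC)
  next
    case niso: False
    then obtain w0 where w0: "w0 \<in> X \<union> Y" "E v w0" by blast
    have w0Y: "w0 \<in> Y" using crs[OF vV w0(1) w0(2)] vY by blast
    show ?thesis
    proof (cases "\<exists>y\<in>X \<union> Y. E v y \<and> (\<forall>w\<in>X \<union> Y. E v w \<longrightarrow> w = y)")
      case True
      then obtain y where y: "y \<in> X \<union> Y" "E v y" "\<forall>w\<in>X \<union> Y. E v w \<longrightarrow> w = y" by blast
      have yY: "y \<in> Y" using crs[OF vV y(1) y(2)] vY by blast
      have "\<And>w. w \<in> Y \<Longrightarrow> E v w \<Longrightarrow> w = y" using y(3) by blast
      from ins_pend[OF IH yY y(2) this] show ?thesis by (simp only: Xeq)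
    next
      case False
      note pF = False
      have H3: "\<exists>v'\<in>X \<union> Y. v' \<noteq> v \<and> (\<forall>w\<in>X \<union> Y. E v w \<longleftrightarrow> E v' w)"
        using H
      proof (elim disjE)
        assume "\<forall>w\<in>X \<union> Y. \<not> E v w" then show ?thesis using niso by blast
      next
        assume "\<exists>y\<in>X \<union> Y. E v y \<and> (\<forall>w\<in>X \<union> Y. E v w \<longrightarrow> w = y)" then show ?thesis using pF by blast
      qed
      then obtain v' where v': "v' \<in> X \<union> Y" "v' \<noteq> v" "\<forall>w\<in>X \<union> Y. E v w \<longleftrightarrow> E v' w"
        by blast
      have Ev'w0: "E v' w0" using v'(3) w0 by blast
      have w0nX: "w0 \<notin> X" using w0Y dsj by blast
      have "(v' \<in> X \<and> w0 \<in> Y) \<or> (v' \<in> Y \<and> w0 \<in> X)" by (rule crs[OF v'(1) w0(1) Ev'w0])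
      then have "v' \<in> X" using w0nX by blast
      then have v'X: "v' \<in> X - {v}" using v'(2) by blast
      have "\<And>w. w \<in> Y \<Longrightarrow> E v w \<longleftrightarrow> E v' w" using v'(3) by blast
      from ins_twin[OF IH v'X this] show ?thesis by (simp only: Xeq)
    qed
  qed
qed

lemma exists_INV:
  assumes "finite (X \<union> Y)" "X \<inter> Y = {}" "\<And>u w. E u w \<Longrightarrow> E w u"
    "\<And>u w. u \<in> X \<union> Y \<Longrightarrow> w \<in> X \<union> Y \<Longrightarrow> E u w \<Longrightarrow> (u \<in> X \<and> w \<in> Y) \<or> (u \<in> Y \<and> w \<in> X)"
    "distance_hereditary (X \<union> Y) E"
  shows "\<exists>f1 f2 f3. INV X Y E f1 f2 f3"
  using assms
proof (induction "card (X \<union> Y)" arbitrary: X Y rule: less_induct)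
  case less
  show ?case
  proof (cases "X \<union> Y = {}")
    case True
    then have "X = {}" "Y = {}" by auto
    then have "INV X Y E (\<lambda>_. 0) (\<lambda>_. 0) (\<lambda>_. 0)" unfolding INV_def by simp
    then show ?thesis by blast
  next
    case False
    interpret bdh "X \<union> Y" X Y E
    proof
      show "finite (X \<union> Y)" by (rule less.prems(1))
      show "X \<union> Y = X \<union> Y" by simp
      show "X \<inter> Y = {}" by (rule less.prems(2))
      show "\<And>u w. E u w \<Longrightarrow> E w u" by (rule less.prems(3))
      show "\<And>u w. u \<in> X \<union> Y \<Longrightarrow> w \<in> X \<union> Y \<Longrightarrow> E u w \<Longrightarrow> (u \<in> X \<and> w \<in> Y) \<or> (u \<in> Y \<and> w \<in> X)"
        by (rule less.prems(4))
      show "distance_hereditary (X \<union> Y) E" by (rule less.prems(5))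
    qed
    obtain v where vV: "v \<in> X \<union> Y" and H:
      "(\<forall>w\<in>X \<union> Y. \<not> E v w) \<or> (\<exists>y\<in>X \<union> Y. E v y \<and> (\<forall>w\<in>X \<union> Y. E v w \<longrightarrow> w = y))
               \<or> (\<exists>v'\<in>X \<union> Y. v' \<noteq> v \<and> (\<forall>w\<in>X \<union> Y. E v w \<longleftrightarrow> E v' w))"
      using struct[OF False] by blast
    show ?thesis
    proof (cases "v \<in> X")
      case True
      have vY: "v \<notin> Y" using True less.prems(2) by blast
      have eq: "(X - {v}) \<union> Y = (X \<union> Y) - {v}" using vY by blast
      have lt: "card ((X - {v}) \<union> Y) < card (X \<union> Y)"
        unfolding eq using vV less.prems(1) by (intro card_Diff1_less)
      have "\<exists>f1 f2 f3. INV (X - {v}) Y E f1 f2 f3"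
      proof (rule less.hyps[OF lt])
        show "finite (X - {v} \<union> Y)" by (rule finite_subset[OF _ less.prems(1)]) blast
        show "(X - {v}) \<inter> Y = {}" using less.prems(2) by blast
        show "\<And>u w. E u w \<Longrightarrow> E w u" by (rule less.prems(3))
        show "\<And>u w. u \<in> X - {v} \<union> Y \<Longrightarrow> w \<in> X - {v} \<union> Y \<Longrightarrow> E u w \<Longrightarrow> (u \<in> X - {v} \<and> w \<in> Y) \<or> (u \<in> Y \<and> w \<in> X - {v})"
          using less.prems(4) vY by blast
        show "distance_hereditary (X - {v} \<union> Y) E"
          by (rule dh_subset[OF less.prems(5)]) blast
      qed
      then obtain f1 f2 f3 where IH: "INV (X - {v}) Y E f1 f2 f3" by blast
      show ?thesis by (rule step[OF less.prems(1-4) True IH H])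
    next
      case False
      then have vY: "v \<in> Y" using vV by blast
      have vX: "v \<notin> X" using False .
      have eq: "X \<union> (Y - {v}) = (X \<union> Y) - {v}" using vX by blast
      have lt: "card (X \<union> (Y - {v})) < card (X \<union> Y)"
        unfolding eq using vV less.prems(1) by (intro card_Diff1_less)
      have "\<exists>f1 f2 f3. INV X (Y - {v}) E f1 f2 f3"
      proof (rule less.hyps[OF lt])
        show "finite (X \<union> (Y - {v}))" by (rule finite_subset[OF _ less.prems(1)]) blast
        show "X \<inter> (Y - {v}) = {}" using less.prems(2) by blast
        show "\<And>u w. E u w \<Longrightarrow> E w u" by (rule less.prems(3))
        show "\<And>u w. u \<in> X \<union> (Y - {v}) \<Longrightarrow> w \<in> X \<union> (Y - {v}) \<Longrightarrow> E u w \<Longrightarrow> (u \<in> X \<and> w \<in> Y - {v}) \<or> (u \<in> Y - {v} \<and> w \<in> X)"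
          using less.prems(4) vX by blast
        show "distance_hereditary (X \<union> (Y - {v})) E"
          by (rule dh_subset[OF less.prems(5)]) blast
      qed
      then obtain f1 f2 f3 where IH0: "INV X (Y - {v}) E f1 f2 f3" by blast
      have IH: "INV (Y - {v}) X E (\<lambda>z. - f1 z) (\<lambda>z. - f3 z) (\<lambda>z. - f2 z)"
        by (rule INV_dual[OF IH0 less.prems(3)])
      have U: "Y \<union> X = X \<union> Y" by blast
      have "\<exists>g1 g2 g3. INV Y X E g1 g2 g3"
      proof (rule step[OF _ _ less.prems(3) _ vY IH])
        show "finite (Y \<union> X)" using less.prems(1) U by simp
        show "Y \<inter> X = {}" using less.prems(2) by blast
        show "\<And>u w. u \<in> Y \<union> X \<Longrightarrow> w \<in> Y \<union> X \<Longrightarrow> E u w \<Longrightarrow> (u \<in> Y \<and> w \<in> X) \<or> (u \<in> X \<and> w \<in> Y)"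
          using less.prems(4) U by blast
        show "(\<forall>w\<in>Y \<union> X. \<not> E v w) \<or> (\<exists>y\<in>Y \<union> X. E v y \<and> (\<forall>w\<in>Y \<union> X. E v w \<longrightarrow> w = y))
               \<or> (\<exists>v'\<in>Y \<union> X. v' \<noteq> v \<and> (\<forall>w\<in>Y \<union> X. E v w \<longleftrightarrow> E v' w))"
          using H U by simp
      qed
      then obtain g1 g2 g3 where "INV Y X E g1 g2 g3" by blast
      from INV_dual[OF this less.prems(3)] show ?thesis by blast
    qed
  qed
qed

theorem corollary4:
  fixes X Y :: "'a set" and E :: "'a \<Rightarrow> 'a \<Rightarrow> bool"
  assumes "BDH X Y E"
    and "\<not> has_universal_vertex X Y E"
  shows "order_dimension (max_bicliques X Y E) (biclique_order X Y E) \<le> 3"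
proof -
  have bg: "bipartite_graph X Y E" and dh: "distance_hereditary (X \<union> Y) E"
    using assms(1) unfolding BDH_def by auto
  have sg: "simple_graph (X \<union> Y) E" and disj: "X \<inter> Y = {}"
    and cr: "\<forall>u v. E u v \<longrightarrow> (u \<in> X \<and> v \<in> Y) \<or> (u \<in> Y \<and> v \<in> X)"
    using bg unfolding bipartite_graph_def by auto
  have fin: "finite (X \<union> Y)" and sym: "\<And>u w. E u w \<Longrightarrow> E w u"
    using sg unfolding simple_graph_def by auto
  have cross: "\<And>u w. u \<in> X \<union> Y \<Longrightarrow> w \<in> X \<union> Y \<Longrightarrow> E u w \<Longrightarrow> (u \<in> X \<and> w \<in> Y) \<or> (u \<in> Y \<and> w \<in> X)"
    using cr by blast
  obtain f1 f2 f3 where inv: "INV X Y E f1 f2 f3"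
    using exists_INV[OF fin disj sym cross dh] by blast
  have R1: "\<And>x y. x\<in>X \<Longrightarrow> y\<in>Y \<Longrightarrow> E x y \<Longrightarrow> f1 y < f1 x \<and> f2 y < f2 x \<and> f3 y < f3 x"
   and R2: "\<And>u w. u\<in>X \<union> Y \<Longrightarrow> w\<in>X \<union> Y \<Longrightarrow> u \<noteq> w \<Longrightarrow> \<not> E u w \<Longrightarrow> f1 u < f1 w \<or> f2 u < f2 w \<or> f3 u < f3 w"
    using inv unfolding INV_def by blast+
  define F :: "nat \<Rightarrow> 'a \<Rightarrow> int" where "F i = (if i = 0 then f1 else if i = 1 then f2 else f3)" for i
  show ?thesis
  proof (rule dim_from_orders[OF fin disj, of E F])
    fix i x y assume h: "i < (3::nat)" "x \<in> X" "y \<in> Y" "E x y"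
    have "f1 y < f1 x \<and> f2 y < f2 x \<and> f3 y < f3 x" using R1[OF h(2-4)] .
    then show "F i y < F i x" unfolding F_def by auto
  next
    fix x y assume h: "x \<in> X" "y \<in> Y" "\<not> E x y"
    have "x \<noteq> y" using h disj by blast
    then have "f1 x < f1 y \<or> f2 x < f2 y \<or> f3 x < f3 y" using R2[of x y] h by blast
    then show "\<exists>i<3. F i x < F i y"
    proof (elim disjE)
      assume "f1 x < f1 y" then show ?thesis unfolding F_def by (intro exI[of _ 0]) simp
    next
      assume "f2 x < f2 y" then show ?thesis unfolding F_def by (intro exI[of _ 1]) simp
    next
      assume "f3 x < f3 y" then show ?thesis unfolding F_def by (intro exI[of _ 2]) simp
    qed
  qed
qed


end
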